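(* Let $h_{00},h_{11},h_{22},h_{33}>0$ and consider the system $\mathrm{(SL)}$ below with $g_{ii}(0)=h_{ii}$. Then the solution exists for all $t\ge0$ and, as $t\to\infty$: $g_{00}\to0$, $g_{11}\to0$, $g_{22}\to\infty$, $g_{33}\to\infty$, and $g_{33}-g_{22}\to 0$.
   Context: Let $\det h = h_{00}h_{11}h_{22}h_{33}$, $\beta = \frac{1}{6(\det h)^2}$, and $p(x,y,z) = x^4 - x^3(y+z) + x^2yz + x(-y^3+y^2z+yz^2-z^3) + y^4 - y^3z - yz^3 + z^4$, $q(x,y,z) = 5x^4 - 3x^3(y+z) + x^2yz + x(y^3-y^2z-yz^2+z^3) - 3y^4 + 3y^3z + 3yz^3 - 3z^4$. System (SL): $\dot g_{00} = -\beta\,p(-g_{11},g_{22},g_{33})\,g_{00}^3$, $\dot g_{11} = -\beta\,q(-g_{11},g_{22},g_{33})\,g_{00}^2g_{11}$, $\dot g_{22} = -\beta\,q(g_{22},-g_{11},g_{33})\,g_{00}^2g_{22}$, $\dot g_{33} = -\beta\,q(g_{33},-g_{11},g_{22})\,g_{00}^2g_{33}$. This is Bach flow $\partial_t g=B$, $g(0)=h$, on $\mathbb{R}\times\widetilde{SL}(2,\mathbb{R})$ in a diagonalizing basis: a left-invariant frame $\{\partial_0,e_1,e_2,e_3\}$ with $[e_i,e_j]=\sum\varepsilon_{ijl}E^{lk}e_k$, $E=\mathrm{diag}(-1,1,1)$, and $g=\mathrm{diag}(g_{00},g_{11},g_{22},g_{33})$; $B$ is the Bach tensor. Along the flow $g_{00}g_{11}g_{22}g_{33}=\det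 h$. *)

theory Defs
  imports "HOL-Analysis.Analysis"
begin

definition p_SL :: "real \<Rightarrow> real \<Rightarrow> real \<Rightarrow> real" where
  "p_SL x y z = x^4 - x^3*(y+z) + x^2*y*z + x*(-(y^3) + y^2*z + y*z^2 - z^3)
               + y^4 - y^3*z - y*z^3 + z^4"

definition q_SL :: "real \<Rightarrow> real \<Rightarrow> real \<Rightarrow> real" where
  "q_SL x y z = 5*x^4 - 3*x^3*(y+z) + x^2*y*z + x*(y^3 - y^2*z - y*z^2 + z^3)
               - 3*y^4 + 3*y^3*z + 3*y*z^3 - 3*z^4"

definition beta_SL :: "real \<Rightarrow> real \<Rightarrow> real \<Rightarrow> real \<Rightarrow> real" where
  "beta_SL h0 h1 h2 h3 = 1 / (6 * (h0*h1*h2*h3)^2)"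

definition SL_solution ::
  "real \<Rightarrow> real \<Rightarrow> real \<Rightarrow> real \<Rightarrow>
   (real \<Rightarrow> real) \<Rightarrow> (real \<Rightarrow> real) \<Rightarrow> (real \<Rightarrow> real) \<Rightarrow> (real \<Rightarrow> real) \<Rightarrow> bool" where
  "SL_solution h0 h1 h2 h3 g0 g1 g2 g3 \<longleftrightarrow>
     g0 0 = h0 \<and> g1 0 = h1 \<and> g2 0 = h2 \<and> g3 0 = h3 \<and>
     (\<forall>t\<ge>0.
        (g0 has_real_derivative
           (- beta_SL h0 h1 h2 h3 * p_SL (- g1 t) (g2 t) (g3 t) * (g0 t)^3)) (at t within {0..}) \<and>
        (g1 has_real_derivative
           (- beta_SL h0 h1 h2 h3 * q_SL (- g1 t) (g2 t) (g3 t) * (g0 t)^2 * g1 t)) (at t within {0..}) \<and>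
        (g2 has_real_derivative
           (- beta_SL h0 h1 h2 h3 * q_SL (g2 t) (- g1 t) (g3 t) * (g0 t)^2 * g2 t)) (at t within {0..}) \<and>
        (g3 has_real_derivative
           (- beta_SL h0 h1 h2 h3 * q_SL (g3 t) (- g1 t) (g2 t) * (g0 t)^2 * g3 t)) (at t within {0..}))"

end

theory Submission
  imports Defs "HOL-Real_Asymp.Real_Asymp"
begin

lemma mono_le:
  fixes f f' :: "real \<Rightarrow> real"
  assumes st: "0 \<le> s" "s \<le> t" "t \<le> T"
    and d: "\<And>x. x\<in>{0..T} \<Longrightarrow> (f has_real_derivative f' x) (at x within {0..T})"
    and n: "\<And>x. x\<in>{0..T} \<Longrightarrow> f' x \<le> 0"
  shows "f t \<le> f s"
proof -
  have "\<And>x. s \<le> x \<Longrightarrow> x \<le> t \<Longrightarrow> (f has_derivative (\<lambda>h. f' x * h)) (at x within {s..t})"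
  proof -
    fix x assume "s \<le> x" "x \<le> t"
    then have "(f has_real_derivative f' x) (at x within {0..T})" using d st by auto
    then have "(f has_real_derivative f' x) (at x within {s..t})"
      by (rule DERIV_subset) (use st in auto)
    then show "(f has_derivative (\<lambda>h. f' x * h)) (at x within {s..t})"
      by (simp add: has_field_derivative_def)
  qed
  from mvt_very_simple[OF st(2) this] obtain x where x: "x\<in>{s..t}" "f t - f s = f' x * (t - s)" by auto
  have "f' x \<le> 0" using n x st by auto
  moreover have "f' x * (t - s) \<le> 0" using calculation st by (simp add: mult_nonpos_nonneg)
  ultimately show ?thesis using x by linarith
qed

lemma mono_ge:
  fixes f f' :: "real \<Rightarrow> real"
  assumes st: "0 \<le> s" "s \<le> t" "t \<le> T"
    and d: "\<And>x. x\<in>{0..T} \<Longrightarrow> (f has_real_derivative f' x) (at x within {0..T})"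
    and n: "\<And>x. x\<in>{0..T} \<Longrightarrow> f' x \<ge> 0"
  shows "f s \<le> f t"
proof -
  have "- f t \<le> - f s"
    by (rule mono_le[OF st, of "\<lambda>x. - f x" "\<lambda>x. - f' x"]) (auto intro!: derivative_eq_intros d simp: n)
  then show ?thesis by simp
qed

lemma mono_le2:
  fixes f f' :: "real \<Rightarrow> real"
  assumes st: "0 \<le> a" "a \<le> s" "s \<le> t" "t \<le> T"
    and d: "\<And>x. x\<in>{0..T} \<Longrightarrow> (f has_real_derivative f' x) (at x within {0..T})"
    and n: "\<And>x. x\<in>{a..T} \<Longrightarrow> f' x \<le> 0"
  shows "f t \<le> f s"
proof -
  have "\<And>x. s \<le> x \<Longrightarrow> x \<le> t \<Longrightarrow> (f has_derivative (\<lambda>h. f' x * h)) (at x within {s..t})"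
  proof -
    fix x assume "s \<le> x" "x \<le> t"
    then have "(f has_real_derivative f' x) (at x within {0..T})" using d st by auto
    then have "(f has_real_derivative f' x) (at x within {s..t})"
      by (rule DERIV_subset) (use st in auto)
    then show "(f has_derivative (\<lambda>h. f' x * h)) (at x within {s..t})"
      by (simp add: has_field_derivative_def)
  qed
  from mvt_very_simple[OF st(3) this] obtain x where x: "x\<in>{s..t}" "f t - f s = f' x * (t - s)" by auto
  have "f' x \<le> 0" using n x st by auto
  moreover have "f' x * (t - s) \<le> 0" using calculation st by (simp add: mult_nonpos_nonneg)
  ultimately show ?thesis using x by linarith
qed

lemma lin_exp:
  fixes f k :: "real \<Rightarrow> real"
  assumes d: "\<And>x. x\<in>{0..T} \<Longrightarrow> (f has_real_derivative k x * f x) (at x within {0..T})"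
    and kc: "continuous_on {0..T} k"
    and t: "t \<in> {0..T}"
  shows "f t = f 0 * exp (integral {0..t} k)"
proof -
  define V where "V x = f x * exp (- integral {0..x} k)" for x
  have dV: "(V has_real_derivative 0) (at x within {0..T})" if "x \<in> {0..T}" for x
  proof -
    have "((\<lambda>x. integral {0..x} k) has_real_derivative k x) (at x within {0..T})"
      by (rule integral_has_real_derivative[OF kc that])
    then show ?thesis unfolding V_def
      by (auto intro!: derivative_eq_intros d that simp: algebra_simps)
  qed
  have "V t \<le> V 0" by (rule mono_le[of 0 t T V "\<lambda>_. 0"]) (use t dV in auto)
  moreover have "V 0 \<le> V t" by (rule mono_ge[of 0 t T V "\<lambda>_. 0"]) (use t dV in auto)
  ultimately have "V t = V 0" by simp
  then show ?thesis unfolding V_def by (simp add: exp_minus field_simps)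
qed


lemma Q1_id: "q_SL (-u) y z = 5*u^4 + 3*u^3*(y+z) + u^2*y*z - (z-y)^2*(u*(y+z) + 3*(y^2+y*z+z^2))"
  unfolding q_SL_def by (simp add: algebra_simps power2_eq_square power3_eq_cube power4_eq_xxxx)
lemma qy_id: "q_SL y (-u) z = -(z-y)*(3*z^3+2*y*z^2+2*y^2*z+5*y^3) - (z-y)*(3*y^2+2*y*z+3*z^2)*u - u^2*y*z - u^3*(y+3*z) - 3*u^4"
  unfolding q_SL_def by (simp add: algebra_simps power2_eq_square power3_eq_cube power4_eq_xxxx)
lemma qzy_id: "q_SL z (-u) y - q_SL y (-u) z = (z-y)*(8*(z+y)*(z^2+y^2) - 4*y*z*(z+y) + 6*u*(z^2+z*y+y^2) - 2*u*y*z + 2*u^3)"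
  unfolding q_SL_def by (simp add: algebra_simps power2_eq_square power3_eq_cube power4_eq_xxxx)
lemma p_id: "p_SL (-u) y z = u^4 + u^3*(y+z) + u^2*y*z + u*(y+z)*(y-z)^2 + (y-z)^2*(y^2+y*z+z^2)"
  unfolding p_SL_def by (simp add: algebra_simps power2_eq_square power3_eq_cube power4_eq_xxxx)
lemma sum_id: "p_SL (-u) y z + q_SL (-u) y z + q_SL y (-u) z + q_SL z (-u) y = 0"
  unfolding q_SL_def p_SL_def by (simp add: algebra_simps power2_eq_square power3_eq_cube power4_eq_xxxx)
lemma p_sym: "p_SL x z y = p_SL x y z"
  unfolding p_SL_def by (simp add: algebra_simps power2_eq_square power3_eq_cube power4_eq_xxxx)
lemma q_sym: "q_SL x z y = q_SL x y z"
  unfolding q_SL_def by (simp add: algebra_simps power2_eq_square power3_eq_cube power4_eq_xxxx)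


definition KK :: "real \<Rightarrow> real \<Rightarrow> real \<Rightarrow> real" where
  "KK u y z = 8*(z+y)*(z^2+y^2) - 4*y*z*(z+y) + 6*u*(z^2+z*y+y^2) - 2*u*y*z + 2*u^3"

lemma KK_lb: fixes u y z :: real assumes "0 < u" "0 < y" "y \<le> z"
  shows "24*y^3 + 16*u*y^2 \<le> KK u y z"
proof -
  have a: "8*z^2 - 4*y*z - 4*y^2 \<ge> 0"
  proof -
    have "8*z^2 - 4*y*z - 4*y^2 = 4*(2*z+y)*(z-y)" by (simp add: algebra_simps power2_eq_square)
    then show ?thesis using assms by simp
  qed
  have b: "(z+y)*(8*z^2+8*y^2-4*y*z) \<ge> 24*y^3"
  proof -
    have "(z+y)*(8*z^2+8*y^2-4*y*z) \<ge> (2*y)*(12*y^2)"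
      by (rule mult_mono) (use assms a in \<open>auto simp: power2_eq_square\<close>)
    then show ?thesis by (simp add: power2_eq_square power3_eq_cube)
  qed
  have c: "6*z^2+4*z*y-10*y^2 \<ge> 0"
  proof -
    have "6*z^2+4*z*y-10*y^2 = 2*(3*z+5*y)*(z-y)" by (simp add: algebra_simps power2_eq_square)
    then show ?thesis using assms by simp
  qed
  have "KK u y z - 24*y^3 - 16*u*y^2 = ((z+y)*(8*z^2+8*y^2-4*y*z) - 24*y^3) + u*(6*z^2+4*z*y-10*y^2) + 2*u^3"
    unfolding KK_def by (simp add: algebra_simps power2_eq_square power3_eq_cube)
  moreover have "u*(6*z^2+4*z*y-10*y^2) \<ge> 0" using c assms by simp
  moreover have "u^3 > 0" using assms by simp
  ultimately show ?thesis using b by linarith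
qed

lemma KK_pos: fixes u y z :: real assumes "0 < u" "0 < y" "y \<le> z" shows "KK u y z > 0"
proof -
  have "24*y^3 + 16*u*y^2 > 0" using assms by (simp add: add_pos_pos)
  then show ?thesis using KK_lb[OF assms] by linarith
qed

lemma F4_alg: fixes u y z R :: real assumes "0 < u" "0 < y" "y \<le> z" "z \<le> R*y" "1 \<le> R"
  shows "y*(u*(y+z) + 3*(y^2+y*z+z^2)) \<le> (1+R+R^2)*(24*y^3+16*u*y^2)"
proof -
  have yz: "y*z \<le> R*y^2" using assms by (simp add: power2_eq_square mult_left_mono mult.commute mult.left_commute)
  have zz: "z^2 \<le> R^2*y^2"
  proof -
    have "z^2 \<le> (R*y)^2" using assms by (intro power_mono) auto
    then show ?thesis by (simp add: power_mult_distrib)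
  qed
  have "y*(u*(y+z)) = u*(y^2 + y*z)" by (simp add: algebra_simps power2_eq_square)
  also have "\<dots> \<le> u*(y^2 + R*y^2)" using yz assms by (intro mult_left_mono) auto
  also have "\<dots> \<le> (1+R+R^2)*(16*u*y^2)"
  proof -
    have "u*(y^2 + R*y^2) = (1+R)*(u*y^2)" by (simp add: algebra_simps)
    also have "\<dots> \<le> (16*(1+R+R^2))*(u*y^2)" using assms by (intro mult_right_mono) (auto simp: power2_eq_square)
    finally show ?thesis by (simp add: mult_ac)
  qed
  finally have 1: "y*(u*(y+z)) \<le> (1+R+R^2)*(16*u*y^2)" .
  have "y*(3*(y^2+y*z+z^2)) \<le> y*(3*(y^2+R*y^2+R^2*y^2))" using yz zz assms by (intro mult_left_mono) auto
  also have "\<dots> = 3*(1+R+R^2)*y^3" by (simp add: algebra_simps power2_eq_square power3_eq_cube)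
  also have "\<dots> \<le> (1+R+R^2)*(24*y^3)" using assms by (simp add: mult_right_mono)
  finally have 2: "y*(3*(y^2+y*z+z^2)) \<le> (1+R+R^2)*(24*y^3)" .
  show ?thesis using 1 2 by (simp add: algebra_simps)
qed

lemma F5_alg: fixes u y z R :: real assumes "0 < u" "0 < y" "y \<le> z" "z \<le> R*y" "1 \<le> R"
  shows "(3*z^3+2*y*z^2+2*y^2*z+5*y^3) + (3*y^2+2*y*z+3*z^2)*u \<le> R^3*(24*y^3+16*u*y^2)"
proof -
  have z0: "0 \<le> z" using assms by simp
  have zz: "z^2 \<le> (R*y)^2" using assms by (intro power_mono) auto
  have zzz: "z^3 \<le> (R*y)^3" using assms by (intro power_mono) auto
  have R1: "1 \<le> R*R" using assms mult_mono[of 1 R 1 R] by simp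
  have R2: "R \<le> R^2" "R^2 \<le> R^3" "1 \<le> R^2" using assms R1 mult_right_mono[of 1 R "R*R"] by (auto simp: power2_eq_square power3_eq_cube)
  have "3*z^3+2*y*z^2+2*y^2*z+5*y^3 \<le> 3*(R*y)^3+2*y*(R*y)^2+2*y^2*(R*y)+5*y^3"
    using zz zzz assms by (intro add_mono mult_left_mono) auto
  also have "\<dots> = (3*R^3+2*R^2+2*R+5)*y^3" by (simp add: algebra_simps power2_eq_square power3_eq_cube)
  also have "\<dots> \<le> (24*R^3)*y^3" using R2 assms by (intro mult_right_mono) auto
  finally have 1: "3*z^3+2*y*z^2+2*y^2*z+5*y^3 \<le> 24*R^3*y^3" .
  have "(3*y^2+2*y*z+3*z^2)*u \<le> (3*y^2+2*y*(R*y)+3*(R*y)^2)*u"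
    using zz assms by (intro mult_right_mono add_mono) auto
  also have "\<dots> = (3+2*R+3*R^2)*(u*y^2)" by (simp add: algebra_simps power2_eq_square)
  also have "\<dots> \<le> (16*R^3)*(u*y^2)" using R2 assms by (intro mult_right_mono) auto
  finally have 2: "(3*y^2+2*y*z+3*z^2)*u \<le> 16*R^3*(u*y^2)" .
  show ?thesis using 1 2 by (simp add: algebra_simps)
qed


lemma F4_core: fixes u y z R \<rho> :: real
  assumes "0 < u" "0 < y" "y \<le> z" "z \<le> R*y" "1 \<le> R" "0 < \<rho>"
  shows "- \<rho> * q_SL (-u) y z + (1+R+R^2) * (z/y-1) * ((- \<rho> * z * KK u y z) * (z/y-1)) \<le> - \<rho> * (u^2*y*z)"
proof -
  define C where "C = 1+R+R^2"
  define M where "M = u*(y+z) + 3*(y^2+y*z+z^2)"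
  define w where "w = z/y - 1"
  have zy: "z - y = y*w" unfolding w_def using assms by (simp add: field_simps)
  have yM: "y*M \<le> C*KK u y z" using F4_alg[OF assms(1-5)] KK_lb[OF assms(1-3)] assms
    unfolding C_def M_def by (smt (verit) mult_left_mono power2_eq_square zero_le_power2 add_nonneg_nonneg)
  have C0: "C \<ge> 0" unfolding C_def using assms by (simp add: add_nonneg_nonneg)
  have K0: "KK u y z > 0" using KK_pos assms by simp
  have "(z-y)^2*M = w^2 * (y*(y*M))" using zy by (simp add: power2_eq_square mult_ac)
  also have "\<dots> \<le> w^2 * (y*(C*KK u y z))" using yM assms by (intro mult_left_mono) auto
  also have "\<dots> \<le> w^2 * (z*(C*KK u y z))" using assms C0 K0 by (intro mult_left_mono mult_right_mono) auto
  finally have key: "(z-y)^2*M \<le> C * w^2 * z * KK u y z" by (simp add: mult_ac)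
  have pos: "u^2*(5*u^2 + 3*u*(y+z)) \<ge> 0" using assms by simp
  have "q_SL (-u) y z + C * w^2 * z * KK u y z \<ge> u^2*y*z"
    using key pos unfolding Q1_id M_def by (simp add: algebra_simps power2_eq_square power4_eq_xxxx power3_eq_cube)
  then have "\<rho> * (u^2*y*z) \<le> \<rho> * (q_SL (-u) y z + C * w^2 * z * KK u y z)"
    using assms by (intro mult_left_mono) auto
  then show ?thesis unfolding C_def[symmetric] w_def[symmetric] by (simp add: algebra_simps power2_eq_square)
qed

lemma F5_core: fixes u y z R \<rho> :: real
  assumes "0 < u" "0 < y" "y \<le> z" "z \<le> R*y" "1 \<le> R" "0 < \<rho>"
  shows "- \<rho> * q_SL y (-u) z + R^3 * ((- \<rho> * z * KK u y z) * (z/y-1)) \<le> \<rho> * (u^2*y*z + u^3*(y+3*z) + 3*u^4)"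
proof -
  define A where "A = (3*z^3+2*y*z^2+2*y^2*z+5*y^3) + (3*y^2+2*y*z+3*z^2)*u"
  define w where "w = z/y - 1"
  have zy: "z - y = y*w" unfolding w_def using assms by (simp add: field_simps)
  have w0: "w \<ge> 0" unfolding w_def using assms by (simp add: field_simps)
  have KA: "A \<le> R^3*KK u y z" using F5_alg[OF assms(1-5)] KK_lb[OF assms(1-3)] assms
    unfolding A_def by (smt (verit) mult_left_mono zero_le_power)
  have K0: "KK u y z > 0" using KK_pos assms by simp
  have R0: "R^3 \<ge> 0" using assms by simp
  have "(z-y)*A = y*w*A" using zy by simp
  also have "\<dots> \<le> y*w*(R^3*KK u y z)" using KA assms w0 by (intro mult_left_mono) auto
  also have "\<dots> \<le> z*w*(R^3*KK u y z)" using assms w0 K0 R0 by (intro mult_right_mono) auto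
  finally have key: "(z-y)*A \<le> R^3 * z * KK u y z * w" by (simp add: mult_ac)
  have "- q_SL y (-u) z - R^3 * z * KK u y z * w \<le> u^2*y*z + u^3*(y+3*z) + 3*u^4"
    using key unfolding qy_id A_def by (simp add: algebra_simps)
  then have "\<rho> * (- q_SL y (-u) z - R^3 * z * KK u y z * w) \<le> \<rho> * (u^2*y*z + u^3*(y+3*z) + 3*u^4)"
    using assms by (intro mult_left_mono) auto
  then show ?thesis unfolding w_def[symmetric] by (simp add: algebra_simps)
qed


lemma C5_alg: fixes u y z U h :: real
  assumes "0 < u" "u \<le> U" "0 < h" "h \<le> y" "y \<le> z"
  shows "(u^2*y*z + u^3*(y+3*z) + 3*u^4) / (6*(u*y*z)^2) \<le> (1/6 + 2*U/(3*h) + U^2/(2*h^2)) / y^2"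
proof -
  have y0: "y > 0" and z0: "z > 0" using assms by auto
  have e: "(u^2*y*z + u^3*(y+3*z) + 3*u^4) / (6*(u*y*z)^2)
      = (1/(6*y*z) + u*(y+3*z)/(6*y^2*z^2) + u^2/(2*y^2*z^2))"
    using assms y0 z0 by (simp add: field_simps power2_eq_square power3_eq_cube power4_eq_xxxx)
  have t1: "1/(6*y*z) \<le> (1/6)/y^2"
    using y0 z0 assms by (simp add: field_simps power2_eq_square mult_left_mono)
  have t2: "u*(y+3*z)/(6*y^2*z^2) \<le> (2*U/(3*h))/y^2"
  proof -
    have "u*(y+3*z) \<le> U*(4*z)" using assms by (intro mult_mono) auto
    then have "u*(y+3*z)/(6*y^2*z^2) \<le> U*(4*z)/(6*y^2*z^2)"
      using y0 z0 by (intro divide_right_mono) auto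
    also have "\<dots> = (2*U/(3*z))/y^2" using y0 z0 by (simp add: field_simps power2_eq_square)
    also have "\<dots> \<le> (2*U/(3*h))/y^2" using assms y0 z0
      by (intro divide_right_mono divide_left_mono) (auto intro: mult_pos_pos)
    finally show ?thesis .
  qed
  have t3: "u^2/(2*y^2*z^2) \<le> (U^2/(2*h^2))/y^2"
  proof -
    have "u^2 \<le> U^2" using assms by (intro power_mono) auto
    moreover have "h^2 \<le> z^2" using assms by (intro power_mono) auto
    ultimately have "u^2/(2*z^2) \<le> U^2/(2*h^2)" using assms z0
      by (intro frac_le) auto
    then have "(u^2/(2*z^2))/y^2 \<le> (U^2/(2*h^2))/y^2" using y0 by (intro divide_right_mono) auto
    then show ?thesis by (simp add: field_simps)
  qed
  show ?thesis unfolding e using t1 t2 t3 by (simp add: add_divide_distrib)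
qed

lemma Cu_alg: fixes u y z U h :: real
  assumes "0 < u" "u \<le> U" "0 < h" "h \<le> y" "y \<le> z"
  shows "(5*u^2+3*u*(y+z)+y*z) / (6*y^2*z^2) \<le> 5*U^2/(6*h^4) + U/h^3 + 1/(6*h^2)"
proof -
  have y0: "y > 0" and z0: "z > 0" using assms by auto
  have e: "(5*u^2+3*u*(y+z)+y*z) / (6*y^2*z^2) = 5*u^2/(6*y^2*z^2) + u*(y+z)/(2*y^2*z^2) + 1/(6*y*z)"
    using y0 z0 by (simp add: field_simps power2_eq_square)
  have hy: "h^2 \<le> y^2" "h^2 \<le> z^2" "h*h \<le> y*z" using assms by (auto intro!: power_mono mult_mono)
  have t1: "5*u^2/(6*y^2*z^2) \<le> 5*U^2/(6*h^4)"
  proof -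
    have "u^2 \<le> U^2" using assms by (intro power_mono) auto
    moreover have "h^4 \<le> y^2*z^2" using hy assms mult_mono[of "h^2" "y^2" "h^2" "z^2"]
      by (simp add: power4_eq_xxxx power2_eq_square)
    ultimately show ?thesis using assms by (intro frac_le) auto
  qed
  have t2: "u*(y+z)/(2*y^2*z^2) \<le> U/h^3"
  proof -
    have e2: "u*(y+z)/(2*y^2*z^2) = u/(2*y*z^2) + u/(2*y^2*z)" using y0 z0 by (simp add: field_simps power2_eq_square)
    have m1: "2*h^3 \<le> 2*y*z^2" using assms hy mult_mono[of h y "h^2" "z^2"]
        by (simp add: power3_eq_cube power2_eq_square mult_ac)
    have m2: "2*h^3 \<le> 2*y^2*z" using assms hy mult_mono[of "h^2" "y^2" h z]
        by (simp add: power3_eq_cube power2_eq_square mult_ac)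
    have a: "u/(2*y*z^2) \<le> U/(2*h^3)" by (rule frac_le) (use assms m1 in auto)
    have b: "u/(2*y^2*z) \<le> U/(2*h^3)" by (rule frac_le) (use assms m2 in auto)
    show ?thesis unfolding e2 using a b by simp
  qed
  have t3: "1/(6*y*z) \<le> 1/(6*h^2)" using hy assms by (intro frac_le) (auto simp: power2_eq_square)
  show ?thesis unfolding e using t1 t2 t3 by linarith
qed

definition SLloc ::
  "real \<Rightarrow> real \<Rightarrow> real \<Rightarrow> real \<Rightarrow> real \<Rightarrow>
   (real \<Rightarrow> real) \<Rightarrow> (real \<Rightarrow> real) \<Rightarrow> (real \<Rightarrow> real) \<Rightarrow> (real \<Rightarrow> real) \<Rightarrow> bool" where
  "SLloc h0 h1 h2 h3 T g0 g1 g2 g3 \<longleftrightarrow>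
     g0 0 = h0 \<and> g1 0 = h1 \<and> g2 0 = h2 \<and> g3 0 = h3 \<and>
     (\<forall>t\<in>{0..T}.
        (g0 has_real_derivative
           (- beta_SL h0 h1 h2 h3 * p_SL (- g1 t) (g2 t) (g3 t) * (g0 t)^3)) (at t within {0..T}) \<and>
        (g1 has_real_derivative
           (- beta_SL h0 h1 h2 h3 * q_SL (- g1 t) (g2 t) (g3 t) * (g0 t)^2 * g1 t)) (at t within {0..T}) \<and>
        (g2 has_real_derivative
           (- beta_SL h0 h1 h2 h3 * q_SL (g2 t) (- g1 t) (g3 t) * (g0 t)^2 * g2 t)) (at t within {0..T}) \<and>
        (g3 has_real_derivative
           (- beta_SL h0 h1 h2 h3 * q_SL (g3 t) (- g1 t) (g2 t) * (g0 t)^2 * g3 t)) (at t within {0..T}))"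

locale loc =
  fixes h0 h1 h2 h3 T :: real and g0 g1 g2 g3 :: "real \<Rightarrow> real"
  assumes hpos: "h0 > 0" "h1 > 0" "h2 > 0" "h3 > 0" and h23: "h2 \<le> h3" and Tnn: "T \<ge> 0"
    and sol: "SLloc h0 h1 h2 h3 T g0 g1 g2 g3"
begin

definition "\<beta> = beta_SL h0 h1 h2 h3"
definition "D = h0*h1*h2*h3"

lemma init: "g0 0 = h0" "g1 0 = h1" "g2 0 = h2" "g3 0 = h3"
  using sol unfolding SLloc_def by auto

lemma d0: "t\<in>{0..T} \<Longrightarrow> (g0 has_real_derivative (- \<beta> * p_SL (- g1 t) (g2 t) (g3 t) * (g0 t)^3)) (at t within {0..T})"
  and d1: "t\<in>{0..T} \<Longrightarrow> (g1 has_real_derivative (- \<beta> * q_SL (- g1 t) (g2 t) (g3 t) * (g0 t)^2 * g1 t)) (at t within {0..T})"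
  and d2: "t\<in>{0..T} \<Longrightarrow> (g2 has_real_derivative (- \<beta> * q_SL (g2 t) (- g1 t) (g3 t) * (g0 t)^2 * g2 t)) (at t within {0..T})"
  and d3: "t\<in>{0..T} \<Longrightarrow> (g3 has_real_derivative (- \<beta> * q_SL (g3 t) (- g1 t) (g2 t) * (g0 t)^2 * g3 t)) (at t within {0..T})"
  using sol unfolding SLloc_def \<beta>_def by auto

lemma cont: "continuous_on {0..T} g0" "continuous_on {0..T} g1" "continuous_on {0..T} g2" "continuous_on {0..T} g3"
  by (rule DERIV_continuous_on, erule d0 d1 d2 d3)+

lemma Dpos: "D > 0" using hpos unfolding D_def by simp
lemma \<beta>_eq: "\<beta> = 1 / (6 * D^2)" unfolding \<beta>_def D_def beta_SL_def by simp
lemma \<beta>pos: "\<beta> > 0" using Dpos \<beta>_eq by simp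

lemma pos_gen:
  assumes d: "\<And>x. x\<in>{0..T} \<Longrightarrow> (f has_real_derivative k x * f x) (at x within {0..T})"
    and kc: "continuous_on {0..T} k" and f0: "f 0 > 0" and t: "t \<in> {0..T}"
  shows "f t > 0"
  using lin_exp[OF d kc t] f0 by simp

lemma gpos: assumes t: "t \<in> {0..T}" shows "g0 t > 0" "g1 t > 0" "g2 t > 0" "g3 t > 0"
proof -
  show "g0 t > 0"
    by (rule pos_gen[of g0 "\<lambda>t. - \<beta> * p_SL (- g1 t) (g2 t) (g3 t) * (g0 t)^2"])
       (use d0 init hpos t in \<open>auto simp: power3_eq_cube power2_eq_square mult_ac p_SL_def intro!: continuous_intros cont\<close>)
  show "g1 t > 0"
    by (rule pos_gen[of g1 "\<lambda>t. - \<beta> * q_SL (- g1 t) (g2 t) (g3 t) * (g0 t)^2"])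
       (use d1 init hpos t in \<open>auto simp: q_SL_def intro!: continuous_intros cont\<close>)
  show "g2 t > 0"
    by (rule pos_gen[of g2 "\<lambda>t. - \<beta> * q_SL (g2 t) (- g1 t) (g3 t) * (g0 t)^2"])
       (use d2 init hpos t in \<open>auto simp: q_SL_def intro!: continuous_intros cont\<close>)
  show "g3 t > 0"
    by (rule pos_gen[of g3 "\<lambda>t. - \<beta> * q_SL (g3 t) (- g1 t) (g2 t) * (g0 t)^2"])
       (use d3 init hpos t in \<open>auto simp: q_SL_def intro!: continuous_intros cont\<close>)
qed

lemma prod: assumes t: "t \<in> {0..T}" shows "g0 t * g1 t * g2 t * g3 t = D"
proof -
  define P where "P x = g0 x * g1 x * g2 x * g3 x" for x
  have dP: "(P has_real_derivative 0) (at x within {0..T})" if "x \<in> {0..T}" for x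
  proof -
    have "(P has_real_derivative
       (- \<beta> * p_SL (- g1 x) (g2 x) (g3 x) * (g0 x)^3) * g1 x * g2 x * g3 x
       + g0 x * (- \<beta> * q_SL (- g1 x) (g2 x) (g3 x) * (g0 x)^2 * g1 x) * g2 x * g3 x
       + g0 x * g1 x * (- \<beta> * q_SL (g2 x) (- g1 x) (g3 x) * (g0 x)^2 * g2 x) * g3 x
       + g0 x * g1 x * g2 x * (- \<beta> * q_SL (g3 x) (- g1 x) (g2 x) * (g0 x)^2 * g3 x)) (at x within {0..T})"
      unfolding P_def
      by (auto intro!: derivative_eq_intros d0 d1 d2 d3 that simp: algebra_simps)
    moreover have "(- \<beta> * p_SL (- g1 x) (g2 x) (g3 x) * (g0 x)^3) * g1 x * g2 x * g3 x
       + g0 x * (- \<beta> * q_SL (- g1 x) (g2 x) (g3 x) * (g0 x)^2 * g1 x) * g2 x * g3 x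
       + g0 x * g1 x * (- \<beta> * q_SL (g2 x) (- g1 x) (g3 x) * (g0 x)^2 * g2 x) * g3 x
       + g0 x * g1 x * g2 x * (- \<beta> * q_SL (g3 x) (- g1 x) (g2 x) * (g0 x)^2 * g3 x)
       = - \<beta> * (g0 x)^3 * g1 x * g2 x * g3 x * (p_SL (- g1 x) (g2 x) (g3 x) + q_SL (- g1 x) (g2 x) (g3 x)
           + q_SL (g2 x) (- g1 x) (g3 x) + q_SL (g3 x) (- g1 x) (g2 x))"
      by (simp add: algebra_simps power2_eq_square power3_eq_cube)
    ultimately show ?thesis by (simp add: sum_id)
  qed
  have "P t \<le> P 0" by (rule mono_le[of 0 t T P "\<lambda>_. 0"]) (use t dP in auto)
  moreover have "P 0 \<le> P t" by (rule mono_ge[of 0 t T P "\<lambda>_. 0"]) (use t dP in auto)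
  ultimately show ?thesis using init unfolding P_def D_def by simp
qed

lemma rho: assumes t: "t \<in> {0..T}" shows "\<beta> * (g0 t)^2 = 1 / (6 * (g1 t * g2 t * g3 t)^2)"
proof -
  have "\<beta> * (g0 t)^2 * (6 * (g1 t * g2 t * g3 t)^2) = 6 * \<beta> * (g0 t * g1 t * g2 t * g3 t)^2"
    by (simp add: power2_eq_square)
  also have "\<dots> = 1" using prod[OF t] \<beta>_eq Dpos by simp
  finally show ?thesis using gpos[OF t] by (simp add: field_simps)
qed


definition "R = h3/h2"
definition "w0 = R - 1"
definition "w t = g3 t / g2 t - 1" for t
definition "kw t = - (\<beta>*(g0 t)^2) * g3 t * KK (g1 t) (g2 t) (g3 t)" for t

lemma R_ge1: "R \<ge> 1" using hpos h23 unfolding R_def by simp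
lemma R_nz[simp]: "R \<noteq> 0" using R_ge1 by simp
lemma w0_nn: "w0 \<ge> 0" using R_ge1 unfolding w0_def by simp
lemma w_init: "w 0 = w0" unfolding w_def w0_def R_def using init by simp

lemma dw: assumes t: "t \<in> {0..T}" shows "(w has_real_derivative kw t * w t) (at t within {0..T})"
proof -
  have "(w has_real_derivative ((- \<beta> * q_SL (g3 t) (- g1 t) (g2 t) * (g0 t)^2 * g3 t) * g2 t
        - g3 t * (- \<beta> * q_SL (g2 t) (- g1 t) (g3 t) * (g0 t)^2 * g2 t)) / (g2 t * g2 t) - 0) (at t within {0..T})"
    unfolding w_def[abs_def]
    by (intro DERIV_diff DERIV_divide d2 d3 t DERIV_const) (use gpos[OF t] in auto)
  moreover have "((- \<beta> * q_SL (g3 t) (- g1 t) (g2 t) * (g0 t)^2 * g3 t) * g2 t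
        - g3 t * (- \<beta> * q_SL (g2 t) (- g1 t) (g3 t) * (g0 t)^2 * g2 t)) / (g2 t * g2 t) - 0
        = kw t * w t"
  proof -
    have "(- \<beta> * q_SL (g3 t) (- g1 t) (g2 t) * (g0 t)^2 * g3 t) * g2 t
        - g3 t * (- \<beta> * q_SL (g2 t) (- g1 t) (g3 t) * (g0 t)^2 * g2 t)
        = - \<beta> * (g0 t)^2 * g3 t * g2 t * (q_SL (g3 t) (- g1 t) (g2 t) - q_SL (g2 t) (- g1 t) (g3 t))"
      by (simp add: algebra_simps)
    also have "\<dots> = - \<beta> * (g0 t)^2 * g3 t * g2 t * ((g3 t - g2 t) * KK (g1 t) (g2 t) (g3 t))"
      by (simp add: qzy_id KK_def)
    finally have eq: "(- \<beta> * q_SL (g3 t) (- g1 t) (g2 t) * (g0 t)^2 * g3 t) * g2 t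
        - g3 t * (- \<beta> * q_SL (g2 t) (- g1 t) (g3 t) * (g0 t)^2 * g2 t)
        = - \<beta> * (g0 t)^2 * g3 t * g2 t * ((g3 t - g2 t) * KK (g1 t) (g2 t) (g3 t))" .
    have "(- \<beta> * (g0 t)^2 * g3 t * g2 t * ((g3 t - g2 t) * KK (g1 t) (g2 t) (g3 t))) / (g2 t * g2 t) - 0 = kw t * w t"
      using gpos[OF t] unfolding kw_def w_def by (simp add: field_simps)
    then show ?thesis by (simp only: eq)
  qed
  ultimately show ?thesis by simp
qed

lemma kw_cont: "continuous_on {0..T} kw"
  unfolding kw_def KK_def by (intro continuous_intros cont)

lemma w_nn: assumes t: "t \<in> {0..T}" shows "w t \<ge> 0"
  using lin_exp[OF dw kw_cont t] w_init w0_nn by simp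

lemma yz: assumes t: "t \<in> {0..T}" shows "g2 t \<le> g3 t"
  using w_nn[OF t] gpos[OF t] unfolding w_def by (simp add: field_simps)

lemma kw_nonpos: assumes t: "t \<in> {0..T}" shows "kw t \<le> 0"
proof -
  have "KK (g1 t) (g2 t) (g3 t) > 0" using KK_pos gpos[OF t] yz[OF t] by auto
  then show ?thesis unfolding kw_def using \<beta>pos gpos[OF t] by (simp add: mult_nonneg_nonneg)
qed

lemma w_anti: assumes "0 \<le> s" "s \<le> t" "t \<le> T" shows "w t \<le> w s"
  by (rule mono_le[OF assms, of w "\<lambda>x. kw x * w x"]) (auto intro: dw simp: mult_nonpos_nonneg kw_nonpos w_nn)

lemma w_le: assumes t: "t \<in> {0..T}" shows "w t \<le> w0"
  using w_anti[of 0 t] t w_init by auto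

lemma zR: assumes t: "t \<in> {0..T}" shows "g3 t \<le> R * g2 t"
  using w_le[OF t] gpos[OF t] unfolding w_def w0_def by (simp add: field_simps)


definition "\<rho> t = \<beta> * (g0 t)^2" for t
definition "Cc = 1 + R + R^2"
definition "U0 = h1 * exp (Cc * w0^2 / 2)"

lemma \<rho>_eq: "t \<in> {0..T} \<Longrightarrow> \<rho> t = 1 / (6 * (g1 t * g2 t * g3 t)^2)"
  unfolding \<rho>_def by (rule rho)
lemma \<rho>_pos: "t \<in> {0..T} \<Longrightarrow> \<rho> t > 0"
  unfolding \<rho>_def using \<beta>pos gpos[of t] by simp

lemma kw_eq: "kw t = - \<rho> t * g3 t * KK (g1 t) (g2 t) (g3 t)"
  unfolding kw_def \<rho>_def by simp
lemma w_eq: "w t = g3 t / g2 t - 1" unfolding w_def by simp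

lemma dl0: assumes t: "t \<in> {0..T}"
  shows "((\<lambda>s. ln (g0 s)) has_real_derivative (- \<rho> t * p_SL (- g1 t) (g2 t) (g3 t))) (at t within {0..T})"
proof -
  have "((\<lambda>s. ln (g0 s)) has_real_derivative (- \<beta> * p_SL (- g1 t) (g2 t) (g3 t) * (g0 t)^3) / g0 t) (at t within {0..T})"
    using DERIV_ln_divide[THEN DERIV_chain2, OF _ d0[OF t]] gpos[OF t] by simp
  then show ?thesis using gpos[OF t] unfolding \<rho>_def by (simp add: power3_eq_cube power2_eq_square mult_ac)
qed
lemma dl1: assumes t: "t \<in> {0..T}"
  shows "((\<lambda>s. ln (g1 s)) has_real_derivative (- \<rho> t * q_SL (- g1 t) (g2 t) (g3 t))) (at t within {0..T})"
proof -
  have "((\<lambda>s. ln (g1 s)) has_real_derivative (- \<beta> * q_SL (- g1 t) (g2 t) (g3 t) * (g0 t)^2 * g1 t) / g1 t) (at t within {0..T})"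
    using DERIV_ln_divide[THEN DERIV_chain2, OF _ d1[OF t]] gpos[OF t] by simp
  then show ?thesis using gpos[OF t] unfolding \<rho>_def by (simp add: mult_ac)
qed
lemma dl2: assumes t: "t \<in> {0..T}"
  shows "((\<lambda>s. ln (g2 s)) has_real_derivative (- \<rho> t * q_SL (g2 t) (- g1 t) (g3 t))) (at t within {0..T})"
proof -
  have "((\<lambda>s. ln (g2 s)) has_real_derivative (- \<beta> * q_SL (g2 t) (- g1 t) (g3 t) * (g0 t)^2 * g2 t) / g2 t) (at t within {0..T})"
    using DERIV_ln_divide[THEN DERIV_chain2, OF _ d2[OF t]] gpos[OF t] by simp
  then show ?thesis using gpos[OF t] unfolding \<rho>_def by (simp add: mult_ac)
qed
lemma dl3: assumes t: "t \<in> {0..T}"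
  shows "((\<lambda>s. ln (g3 s)) has_real_derivative (- \<rho> t * q_SL (g3 t) (- g1 t) (g2 t))) (at t within {0..T})"
proof -
  have "((\<lambda>s. ln (g3 s)) has_real_derivative (- \<beta> * q_SL (g3 t) (- g1 t) (g2 t) * (g0 t)^2 * g3 t) / g3 t) (at t within {0..T})"
    using DERIV_ln_divide[THEN DERIV_chain2, OF _ d3[OF t]] gpos[OF t] by simp
  then show ?thesis using gpos[OF t] unfolding \<rho>_def by (simp add: mult_ac)
qed

definition "V4 t = ln (g1 t) + Cc * (w t)^2 / 2" for t

lemma dV4: assumes t: "t \<in> {0..T}"
  shows "(V4 has_real_derivative (- \<rho> t * q_SL (- g1 t) (g2 t) (g3 t) + Cc * w t * (kw t * w t))) (at t within {0..T})"
  unfolding V4_def[abs_def]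
  by (rule derivative_eq_intros dl1 dw t refl | simp)+

lemma dV4_le: assumes t: "t \<in> {0..T}"
  shows "- \<rho> t * q_SL (- g1 t) (g2 t) (g3 t) + Cc * w t * (kw t * w t) \<le> - 1 / (6 * g2 t * g3 t)"
proof -
  have "- \<rho> t * q_SL (- g1 t) (g2 t) (g3 t) + Cc * w t * (kw t * w t) \<le> - \<rho> t * ((g1 t)^2 * g2 t * g3 t)"
    unfolding Cc_def kw_eq w_eq
    by (rule F4_core) (use gpos[OF t] yz[OF t] zR[OF t] R_ge1 \<rho>_pos[OF t] in auto)
  also have "\<dots> = - 1 / (6 * g2 t * g3 t)"
    using gpos[OF t] unfolding \<rho>_eq[OF t] by (simp add: field_simps power2_eq_square)
  finally show ?thesis .
qed

lemma V4_anti: assumes "0 \<le> s" "s \<le> t" "t \<le> T" shows "V4 t \<le> V4 s"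
proof (rule mono_le[OF assms, of V4])
  fix x assume x: "x \<in> {0..T}"
  show "(V4 has_real_derivative (- \<rho> x * q_SL (- g1 x) (g2 x) (g3 x) + Cc * w x * (kw x * w x))) (at x within {0..T})"
    by (rule dV4[OF x])
  have "- 1 / (6 * g2 x * g3 x) \<le> 0" using gpos[OF x] by (simp add: divide_nonpos_pos)
  then show "- \<rho> x * q_SL (- g1 x) (g2 x) (g3 x) + Cc * w x * (kw x * w x) \<le> 0"
    using dV4_le[OF x] by linarith
qed

lemma u_le: assumes t: "t \<in> {0..T}" shows "g1 t \<le> U0"
proof -
  have "V4 t \<le> V4 0" using V4_anti[of 0 t] t by auto
  moreover have "V4 0 = ln h1 + Cc * w0^2 / 2" unfolding V4_def using init w_init by simp
  moreover have "Cc * (w t)^2 / 2 \<ge> 0" unfolding Cc_def using R_ge1 by simp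
  ultimately have "ln (g1 t) \<le> ln h1 + Cc * w0^2 / 2" unfolding V4_def by linarith
  then have "exp (ln (g1 t)) \<le> exp (ln h1 + Cc * w0^2 / 2)" by simp
  then show ?thesis using gpos[OF t] hpos unfolding U0_def by (simp add: exp_add)
qed


lemma qy_nonpos: assumes t: "t \<in> {0..T}"
  shows "- q_SL (g2 t) (- g1 t) (g3 t) \<ge> (g1 t)^2 * g2 t * g3 t"
proof -
  have a: "(g3 t - g2 t)*(3*(g3 t)^3+2*g2 t*(g3 t)^2+2*(g2 t)^2*g3 t+5*(g2 t)^3) \<ge> 0"
    using gpos[OF t] yz[OF t] by simp
  have b: "(g3 t - g2 t)*(3*(g2 t)^2+2*g2 t*g3 t+3*(g3 t)^2)*g1 t \<ge> 0"
    using gpos[OF t] yz[OF t] by simp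
  have c: "(g1 t)^3*(g2 t+3*g3 t) + 3*(g1 t)^4 \<ge> 0" using gpos[OF t] by simp
  show ?thesis unfolding qy_id using a b c by linarith
qed

lemma y_mono: assumes "0 \<le> s" "s \<le> t" "t \<le> T" shows "g2 s \<le> g2 t"
proof (rule mono_ge[OF assms, of g2])
  fix x assume x: "x \<in> {0..T}"
  show "(g2 has_real_derivative (- \<beta> * q_SL (g2 x) (- g1 x) (g3 x) * (g0 x)^2 * g2 x)) (at x within {0..T})"
    by (rule d2[OF x])
  have "- q_SL (g2 x) (- g1 x) (g3 x) \<ge> 0" using qy_nonpos[OF x] gpos[OF x] by (smt (verit) mult_pos_pos zero_less_power)
  then have h: "0 \<le> \<beta> * (g0 x)^2 * g2 x * (- q_SL (g2 x) (- g1 x) (g3 x))"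
    using \<beta>pos gpos[OF x] by (intro mult_nonneg_nonneg) auto
  have eq: "- \<beta> * q_SL (g2 x) (- g1 x) (g3 x) * (g0 x)^2 * g2 x = \<beta> * (g0 x)^2 * g2 x * (- q_SL (g2 x) (- g1 x) (g3 x))"
    by (simp add: algebra_simps)
  show "- \<beta> * q_SL (g2 x) (- g1 x) (g3 x) * (g0 x)^2 * g2 x \<ge> 0" using h unfolding eq .
qed

lemma y_ge: "t \<in> {0..T} \<Longrightarrow> g2 t \<ge> h2" using y_mono[of 0 t] init by auto
lemma z_ge: "t \<in> {0..T} \<Longrightarrow> g3 t \<ge> h2" using y_ge yz by force

lemma p_nn: "t \<in> {0..T} \<Longrightarrow> p_SL (- g1 t) (g2 t) (g3 t) \<ge> (g1 t)^2 * g2 t * g3 t"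
  unfolding p_id using gpos[of t] by (simp add: add_nonneg_nonneg)

lemma a_anti: assumes "0 \<le> s" "s \<le> t" "t \<le> T" shows "g0 t \<le> g0 s"
proof (rule mono_le[OF assms, of g0])
  fix x assume x: "x \<in> {0..T}"
  show "(g0 has_real_derivative (- \<beta> * p_SL (- g1 x) (g2 x) (g3 x) * (g0 x)^3)) (at x within {0..T})"
    by (rule d0[OF x])
  have "p_SL (- g1 x) (g2 x) (g3 x) \<ge> 0" using p_nn[OF x] gpos[OF x] by (smt (verit) mult_pos_pos zero_less_power)
  then show "- \<beta> * p_SL (- g1 x) (g2 x) (g3 x) * (g0 x)^3 \<le> 0"
    using \<beta>pos gpos[OF x] by (simp add: mult_nonneg_nonneg)
qed

lemma a_le: "t \<in> {0..T} \<Longrightarrow> g0 t \<le> h0" using a_anti[of 0 t] init by auto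

lemma y_sq_lb: assumes t: "t \<in> {0..T}" shows "(g2 t)^2 \<ge> h2^2 + t / (3*R)"
proof -
  define V where "V x = (g2 x)^2 - x / (3*R)" for x
  have "V 0 \<le> V t"
  proof (rule mono_ge[of 0 t T V "\<lambda>x. 2 * g2 x * (- \<beta> * q_SL (g2 x) (- g1 x) (g3 x) * (g0 x)^2 * g2 x) - 1/(3*R)"])
    fix x assume x: "x \<in> {0..T}"
    show "(V has_real_derivative 2 * g2 x * (- \<beta> * q_SL (g2 x) (- g1 x) (g3 x) * (g0 x)^2 * g2 x) - 1/(3*R)) (at x within {0..T})"
      unfolding V_def[abs_def] by (rule derivative_eq_intros d2 x refl | simp)+
    have "2 * g2 x * (- \<beta> * q_SL (g2 x) (- g1 x) (g3 x) * (g0 x)^2 * g2 x)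
        = 2 * (g2 x)^2 * \<rho> x * (- q_SL (g2 x) (- g1 x) (g3 x))" unfolding \<rho>_def by (simp add: power2_eq_square mult_ac)
    also have "\<dots> \<ge> 2 * (g2 x)^2 * \<rho> x * ((g1 x)^2 * g2 x * g3 x)"
      using qy_nonpos[OF x] \<rho>_pos[OF x] by (intro mult_left_mono) auto
    moreover have "2 * (g2 x)^2 * \<rho> x * ((g1 x)^2 * g2 x * g3 x) = g2 x / (3 * g3 x)"
      unfolding \<rho>_eq[OF x] using gpos[OF x] by (simp add: field_simps power2_eq_square)
    moreover have "g2 x / (3 * g3 x) \<ge> 1/(3*R)"
      using zR[OF x] gpos[OF x] R_ge1 by (simp add: field_simps)
    ultimately show "2 * g2 x * (- \<beta> * q_SL (g2 x) (- g1 x) (g3 x) * (g0 x)^2 * g2 x) - 1/(3*R) \<ge> 0" by linarith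
  qed (use t in auto)
  then show ?thesis unfolding V_def using init by simp
qed

definition "C5 = 1/6 + 2*U0/(3*h2) + U0^2/(2*h2^2)"
definition "V5 t = ln (g2 t) + R^3 * w t" for t
definition "Bc = 2 * C5 * exp (2 * R^3 * w0)"
definition "Y0 = h2^2 * exp (2 * R^3 * w0)"

lemma exp2ln: fixes y c :: real shows "y > 0 \<Longrightarrow> exp (2 * (ln y + c)) = y^2 * exp (2*c)"
  by (simp add: distrib_left exp_add exp_double)

lemma U0_pos: "U0 > 0" unfolding U0_def using hpos by simp

lemma dV5: assumes t: "t \<in> {0..T}"
  shows "(V5 has_real_derivative (- \<rho> t * q_SL (g2 t) (- g1 t) (g3 t) + R^3 * (kw t * w t))) (at t within {0..T})"
  unfolding V5_def[abs_def] by (rule derivative_eq_intros dl2 dw t refl | simp)+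

lemma dV5_le: assumes t: "t \<in> {0..T}"
  shows "- \<rho> t * q_SL (g2 t) (- g1 t) (g3 t) + R^3 * (kw t * w t) \<le> C5 / (g2 t)^2"
proof -
  have "- \<rho> t * q_SL (g2 t) (- g1 t) (g3 t) + R^3 * (kw t * w t) \<le>
     \<rho> t * ((g1 t)^2*g2 t*g3 t + (g1 t)^3*(g2 t+3*g3 t) + 3*(g1 t)^4)"
    unfolding kw_eq w_eq
    by (rule F5_core) (use gpos[OF t] yz[OF t] zR[OF t] R_ge1 \<rho>_pos[OF t] in auto)
  also have "\<dots> = ((g1 t)^2*g2 t*g3 t + (g1 t)^3*(g2 t+3*g3 t) + 3*(g1 t)^4) / (6*(g1 t*g2 t*g3 t)^2)"
    unfolding \<rho>_eq[OF t] by simp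
  also have "\<dots> \<le> C5 / (g2 t)^2" unfolding C5_def
    by (rule C5_alg) (use gpos[OF t] u_le[OF t] y_ge[OF t] yz[OF t] hpos in auto)
  finally show ?thesis .
qed

lemma Y_bound: assumes t: "t \<in> {0..T}" shows "(g2 t)^2 \<le> Y0 + Bc * t"
proof -
  define V where "V x = exp (2 * V5 x) - Bc * x" for x
  have "V t \<le> V 0"
  proof (rule mono_le[of 0 t T V "\<lambda>x. exp (2 * V5 x) * (2 * (- \<rho> x * q_SL (g2 x) (- g1 x) (g3 x) + R^3 * (kw x * w x))) - Bc"])
    fix x assume x: "x \<in> {0..T}"
    show "(V has_real_derivative exp (2 * V5 x) * (2 * (- \<rho> x * q_SL (g2 x) (- g1 x) (g3 x) + R^3 * (kw x * w x))) - Bc) (at x within {0..T})"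
      unfolding V_def[abs_def] by (rule derivative_eq_intros dV5 x refl | simp)+
    have e: "exp (2 * V5 x) = (g2 x)^2 * exp (2 * R^3 * w x)"
      unfolding V5_def using gpos[OF x] exp2ln[of "g2 x" "R^3 * w x"] by (simp add: mult_ac)
    have "exp (2 * V5 x) * (2 * (- \<rho> x * q_SL (g2 x) (- g1 x) (g3 x) + R^3 * (kw x * w x)))
        \<le> exp (2 * V5 x) * (2 * (C5 / (g2 x)^2))"
      using dV5_le[OF x] by (intro mult_left_mono) auto
    also have "\<dots> = 2 * C5 * exp (2 * R^3 * w x)" unfolding e using gpos[OF x] by (simp add: field_simps)
    also have "\<dots> \<le> 2 * C5 * exp (2 * R^3 * w0)"
    proof -
      have "C5 \<ge> 0" unfolding C5_def using U0_pos hpos by simp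
      moreover have "R^3 \<ge> 0" using R_ge1 by simp
      ultimately show ?thesis using w_le[OF x] by (intro mult_left_mono) (auto intro: mult_left_mono)
    qed
    finally show "exp (2 * V5 x) * (2 * (- \<rho> x * q_SL (g2 x) (- g1 x) (g3 x) + R^3 * (kw x * w x))) - Bc \<le> 0"
      unfolding Bc_def by simp
  qed (use t in auto)
  moreover have "V 0 = Y0" unfolding V_def V5_def Y0_def using init w_init hpos exp2ln[of h2 "R^3 * w0"]
    by (simp add: mult_ac)
  moreover have "(g2 t)^2 \<le> exp (2 * V5 t)"
  proof -
    have "exp (2 * V5 t) = (g2 t)^2 * exp (2 * R^3 * w t)"
      unfolding V5_def using gpos[OF t] exp2ln[of "g2 t" "R^3 * w t"] by (simp add: mult_ac)
    moreover have "exp (2 * R^3 * w t) \<ge> 1" using w_nn[OF t] R_ge1 by simp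
    ultimately show ?thesis by (simp add: mult_le_cancel_left1)
  qed
  ultimately show ?thesis unfolding V_def by linarith
qed


definition "Cu = 5*U0^2/(6*h2^4) + U0/h2^3 + 1/(6*h2^2)"

lemma u_lb: assumes t: "t \<in> {0..T}" shows "ln (g1 t) \<ge> ln h1 - Cu * t"
proof -
  define V where "V x = ln (g1 x) + Cu * x" for x
  have "V 0 \<le> V t"
  proof (rule mono_ge[of 0 t T V "\<lambda>x. - \<rho> x * q_SL (- g1 x) (g2 x) (g3 x) + Cu"])
    fix x assume x: "x \<in> {0..T}"
    show "(V has_real_derivative - \<rho> x * q_SL (- g1 x) (g2 x) (g3 x) + Cu) (at x within {0..T})"
      unfolding V_def[abs_def] by (rule derivative_eq_intros dl1 x refl | simp)+
    have nn: "(g3 x - g2 x)^2 * (g1 x * (g2 x + g3 x) + 3 * ((g2 x)^2 + g2 x * g3 x + (g3 x)^2)) \<ge> 0"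
      using gpos[OF x] by simp
    have "q_SL (- g1 x) (g2 x) (g3 x) \<le> (g1 x)^2*(5*(g1 x)^2+3*g1 x*(g2 x+g3 x)+g2 x*g3 x)"
      unfolding Q1_id using nn by (simp add: algebra_simps power2_eq_square power3_eq_cube power4_eq_xxxx)
    then have "\<rho> x * q_SL (- g1 x) (g2 x) (g3 x) \<le> \<rho> x * ((g1 x)^2*(5*(g1 x)^2+3*g1 x*(g2 x+g3 x)+g2 x*g3 x))"
      using \<rho>_pos[OF x] by (intro mult_left_mono) auto
    also have "\<dots> = (5*(g1 x)^2+3*g1 x*(g2 x+g3 x)+g2 x*g3 x) / (6*(g2 x)^2*(g3 x)^2)"
      unfolding \<rho>_eq[OF x] using gpos[OF x] by (simp add: field_simps power2_eq_square)
    also have "\<dots> \<le> Cu" unfolding Cu_def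
      by (rule Cu_alg) (use gpos[OF x] u_le[OF x] y_ge[OF x] yz[OF x] hpos in auto)
    finally show "- \<rho> x * q_SL (- g1 x) (g2 x) (g3 x) + Cu \<ge> 0" by linarith
  qed (use t in auto)
  then show ?thesis unfolding V_def using init by simp
qed

lemma C5_pos: "C5 > 0" unfolding C5_def using U0_pos hpos by (simp add: add_pos_nonneg)
lemma Bc_pos: "Bc > 0" unfolding Bc_def using C5_pos by simp
lemma Y0_pos: "Y0 > 0" unfolding Y0_def using hpos by simp

lemma inv_yz: assumes t: "t \<in> {0..T}" shows "1 / (6 * g2 t * g3 t) \<ge> 1 / (6 * R * (Y0 + Bc * t))"
proof -
  have "6 * g2 t * g3 t \<le> 6 * R * (g2 t)^2" using zR[OF t] gpos[OF t] by (simp add: power2_eq_square)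
  also have "\<dots> \<le> 6 * R * (Y0 + Bc * t)" using Y_bound[OF t] R_ge1 by simp
  moreover have "0 < 6 * R * (Y0 + Bc * t)" using Y0_pos Bc_pos R_ge1 t by (simp add: add_pos_nonneg)
  ultimately show ?thesis using gpos[OF t] by (intro divide_left_mono) auto
qed

definition "Lg t = ln (Y0 + Bc * t) / (6 * R * Bc)" for t

lemma dLg: assumes t: "t \<in> {0..T}" shows "(Lg has_real_derivative 1 / (6 * R * (Y0 + Bc * t))) (at t within {0..T})"
proof -
  have p: "Y0 + Bc * t > 0" using Y0_pos Bc_pos t by (simp add: add_pos_nonneg)
  show ?thesis unfolding Lg_def[abs_def]
    by (rule derivative_eq_intros refl | use p Bc_pos in simp)+
qed

lemma u_decay: assumes t: "t \<in> {0..T}" shows "V4 t + Lg t \<le> V4 0 + Lg 0"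
proof (rule mono_le[of 0 t T "\<lambda>x. V4 x + Lg x"
     "\<lambda>x. (- \<rho> x * q_SL (- g1 x) (g2 x) (g3 x) + Cc * w x * (kw x * w x)) + 1 / (6 * R * (Y0 + Bc * x))"])
  fix x assume x: "x \<in> {0..T}"
  show "((\<lambda>x. V4 x + Lg x) has_real_derivative (- \<rho> x * q_SL (- g1 x) (g2 x) (g3 x) + Cc * w x * (kw x * w x)) + 1 / (6 * R * (Y0 + Bc * x))) (at x within {0..T})"
    by (intro DERIV_add dV4 dLg x)
  show "(- \<rho> x * q_SL (- g1 x) (g2 x) (g3 x) + Cc * w x * (kw x * w x)) + 1 / (6 * R * (Y0 + Bc * x)) \<le> 0"
    using dV4_le[OF x] inv_yz[OF x] by simp
qed (use t in auto)

lemma a_decay: assumes t: "t \<in> {0..T}" shows "ln (g0 t) + Lg t \<le> ln h0 + Lg 0"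
proof -
  have "ln (g0 t) + Lg t \<le> ln (g0 0) + Lg 0"
  proof (rule mono_le[of 0 t T "\<lambda>x. ln (g0 x) + Lg x"
     "\<lambda>x. - \<rho> x * p_SL (- g1 x) (g2 x) (g3 x) + 1 / (6 * R * (Y0 + Bc * x))"])
    fix x assume x: "x \<in> {0..T}"
    show "((\<lambda>x. ln (g0 x) + Lg x) has_real_derivative - \<rho> x * p_SL (- g1 x) (g2 x) (g3 x) + 1 / (6 * R * (Y0 + Bc * x))) (at x within {0..T})"
      by (intro DERIV_add dl0 dLg x)
    have "\<rho> x * ((g1 x)^2 * g2 x * g3 x) \<le> \<rho> x * p_SL (- g1 x) (g2 x) (g3 x)"
      using p_nn[OF x] \<rho>_pos[OF x] by (intro mult_left_mono) auto
    moreover have "\<rho> x * ((g1 x)^2 * g2 x * g3 x) = 1 / (6 * g2 x * g3 x)"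
      unfolding \<rho>_eq[OF x] using gpos[OF x] by (simp add: field_simps power2_eq_square)
    ultimately show "- \<rho> x * p_SL (- g1 x) (g2 x) (g3 x) + 1 / (6 * R * (Y0 + Bc * x)) \<le> 0"
      using inv_yz[OF x] by linarith
  qed (use t in auto)
  then show ?thesis using init by simp
qed

definition "\<kappa> = 4 / (U0^2 * R)"
lemma \<kappa>_pos: "\<kappa> > 0" unfolding \<kappa>_def using U0_pos R_ge1 by simp

lemma kw_le: assumes t: "t \<in> {0..T}" shows "kw t \<le> - \<kappa>"
proof -
  have K: "KK (g1 t) (g2 t) (g3 t) \<ge> 24 * (g2 t)^3" using KK_lb[of "g1 t" "g2 t" "g3 t"] gpos[OF t] yz[OF t]
    by (smt (verit) mult_pos_pos zero_less_power)
  have "\<rho> x * g3 x * (24 * (g2 x)^3) = 4 * g2 x / ((g1 x)^2 * g3 x)" if x: "x \<in> {0..T}" for x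
    unfolding \<rho>_eq[OF x] using gpos[OF x] by (simp add: field_simps power2_eq_square power3_eq_cube)
  then have e: "\<rho> t * g3 t * (24 * (g2 t)^3) = 4 * g2 t / ((g1 t)^2 * g3 t)" using t by blast
  have "\<rho> t * g3 t * (24 * (g2 t)^3) \<le> \<rho> t * g3 t * KK (g1 t) (g2 t) (g3 t)"
    using K \<rho>_pos[OF t] gpos[OF t] by (intro mult_left_mono) auto
  moreover have "4 * g2 t / ((g1 t)^2 * g3 t) \<ge> \<kappa>"
  proof -
    have "(g1 t)^2 * g3 t \<le> U0^2 * (R * g2 t)" using u_le[OF t] zR[OF t] gpos[OF t]
      by (intro mult_mono power_mono) auto
    then have "4 * g2 t / ((g1 t)^2 * g3 t) \<ge> 4 * g2 t / (U0^2 * (R * g2 t))"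
      using gpos[OF t] U0_pos R_ge1 by (intro divide_left_mono) auto
    also have "4 * g2 t / (U0^2 * (R * g2 t)) = \<kappa>" unfolding \<kappa>_def using gpos[OF t] by simp
    finally show ?thesis .
  qed
  ultimately show ?thesis unfolding kw_eq using e by linarith
qed

lemma w_exp: assumes t: "t \<in> {0..T}" shows "w t \<le> w0 * exp (- \<kappa> * t)"
proof -
  have "w t * exp (\<kappa> * t) \<le> w 0 * exp (\<kappa> * 0)"
  proof (rule mono_le[of 0 t T "\<lambda>x. w x * exp (\<kappa> * x)" "\<lambda>x. (kw x + \<kappa>) * w x * exp (\<kappa> * x)"])
    fix x assume x: "x \<in> {0..T}"
    show "((\<lambda>x. w x * exp (\<kappa> * x)) has_real_derivative (kw x + \<kappa>) * w x * exp (\<kappa> * x)) (at x within {0..T})"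
      by (rule derivative_eq_intros dw x refl | simp add: algebra_simps)+
    show "(kw x + \<kappa>) * w x * exp (\<kappa> * x) \<le> 0"
      using kw_le[OF x] w_nn[OF x] by (simp add: mult_nonpos_nonneg)
  qed (use t in auto)
  then show ?thesis using w_init by (simp add: exp_minus field_simps)
qed

lemma d_deriv: assumes t: "t \<in> {0..T}"
  shows "((\<lambda>x. g3 x - g2 x) has_real_derivative
     (g2 t * w t * (- \<rho> t * q_SL (g2 t) (- g1 t) (g3 t) + kw t))) (at t within {0..T})"
proof -
  have "((\<lambda>x. g3 x - g2 x) has_real_derivative
     (- \<beta> * q_SL (g3 t) (- g1 t) (g2 t) * (g0 t)^2 * g3 t) - (- \<beta> * q_SL (g2 t) (- g1 t) (g3 t) * (g0 t)^2 * g2 t)) (at t within {0..T})"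
    by (intro DERIV_diff d2 d3 t)
  moreover have "(- \<beta> * q_SL (g3 t) (- g1 t) (g2 t) * (g0 t)^2 * g3 t) - (- \<beta> * q_SL (g2 t) (- g1 t) (g3 t) * (g0 t)^2 * g2 t)
     = g2 t * w t * (- \<rho> t * q_SL (g2 t) (- g1 t) (g3 t) + kw t)"
  proof -
    have q: "q_SL (g3 t) (- g1 t) (g2 t) = q_SL (g2 t) (- g1 t) (g3 t) + (g3 t - g2 t) * KK (g1 t) (g2 t) (g3 t)"
      using qzy_id[of "g3 t" "g1 t" "g2 t"] unfolding KK_def by simp
    have gw: "g2 t * w t = g3 t - g2 t" using gpos[OF t] unfolding w_def by (simp add: field_simps)
    show ?thesis unfolding gw kw_eq \<rho>_def q by (simp add: algebra_simps)
  qed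
  ultimately show ?thesis by simp
qed

lemma d_deriv_le: assumes t: "t \<in> {0..T}" and small: "R^3 * w t \<le> 1/2"
  shows "g2 t * w t * (- \<rho> t * q_SL (g2 t) (- g1 t) (g3 t) + kw t) \<le> (g3 t - g2 t) * (C5 / (g2 t)^2 - \<kappa> / 2)"
proof -
  have gw: "g2 t * w t = g3 t - g2 t" using gpos[OF t] unfolding w_def by (simp add: field_simps)
  have a: "- \<rho> t * q_SL (g2 t) (- g1 t) (g3 t) \<le> C5 / (g2 t)^2 - R^3 * (kw t * w t)" using dV5_le[OF t] by simp
  have "kw t - R^3 * (kw t * w t) = kw t * (1 - R^3 * w t)" by (simp add: algebra_simps)
  also have "\<dots> \<le> (- \<kappa>) * (1/2)"
  proof -
    have "1 - R^3 * w t \<ge> 1/2" using small by simp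
    then have "kw t * (1 - R^3 * w t) \<le> kw t * (1/2)" using kw_nonpos[OF t] by (intro mult_left_mono_neg) auto
    also have "\<dots> \<le> (- \<kappa>) * (1/2)" using kw_le[OF t] by simp
    finally show ?thesis .
  qed
  finally have b: "- \<rho> t * q_SL (g2 t) (- g1 t) (g3 t) + kw t \<le> C5 / (g2 t)^2 - \<kappa> / 2" using a by simp
  have "g2 t * w t \<ge> 0" using gpos[OF t] w_nn[OF t] by simp
  then show ?thesis using b unfolding gw[symmetric] by (intro mult_left_mono) auto
qed


lemma inner: assumes t: "t \<in> {0..T}" and T0: "T \<le> T0"
  shows "D / (U0 * R * (Y0 + Bc * T0)) \<le> g0 t \<and> g0 t \<le> h0 \<and> h1 * exp (- Cu * T0) \<le> g1 t \<and> g1 t \<le> U0 \<and>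
         h2 \<le> g2 t \<and> g2 t \<le> sqrt (Y0 + Bc * T0) \<and> h2 \<le> g3 t \<and> g3 t \<le> R * sqrt (Y0 + Bc * T0)"
proof -
  have tT0: "t \<le> T0" using t T0 by simp
  have t0: "t \<ge> 0" using t by simp
  have Cu0: "Cu \<ge> 0" unfolding Cu_def using U0_pos hpos by simp
  have y2: "(g2 t)^2 \<le> Y0 + Bc * T0" using Y_bound[OF t] Bc_pos tT0 by (smt (verit) mult_left_mono)
  have yY: "g2 t \<le> sqrt (Y0 + Bc * T0)" using y2 gpos[OF t] real_le_rsqrt by blast
  have zY: "g3 t \<le> R * sqrt (Y0 + Bc * T0)" using zR[OF t] yY R_ge1 by (smt (verit) mult_left_mono)
  have u1: "h1 * exp (- Cu * T0) \<le> g1 t"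
  proof -
    have "ln h1 - Cu * T0 \<le> ln (g1 t)" using u_lb[OF t] Cu0 tT0 by (smt (verit) mult_left_mono)
    then have "exp (ln h1 - Cu * T0) \<le> g1 t" using gpos[OF t] by (metis exp_le_cancel_iff exp_ln)
    then show ?thesis using hpos by (simp add: exp_diff exp_minus divide_inverse)
  qed
  have a1: "D / (U0 * R * (Y0 + Bc * T0)) \<le> g0 t"
  proof -
    have "g1 t * g2 t * g3 t \<le> U0 * (g2 t * g3 t)" using u_le[OF t] gpos[OF t] by (simp add: mult.assoc)
    also have "g2 t * g3 t \<le> R * (g2 t)^2" using zR[OF t] gpos[OF t] by (simp add: power2_eq_square mult_ac)
    then have "U0 * (g2 t * g3 t) \<le> U0 * (R * (Y0 + Bc * T0))"
      using y2 U0_pos R_ge1 by (smt (verit) mult_left_mono)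
    finally have p: "g1 t * g2 t * g3 t \<le> U0 * R * (Y0 + Bc * T0)" by (simp add: mult_ac)
    have "g0 t = D / (g1 t * g2 t * g3 t)" using prod[OF t] gpos[OF t] by (simp add: field_simps)
    moreover have "D / (U0 * R * (Y0 + Bc * T0)) \<le> D / (g1 t * g2 t * g3 t)"
    proof (rule divide_left_mono)
      show "0 < U0 * R * (Y0 + Bc * T0) * (g1 t * g2 t * g3 t)"
        using gpos[OF t] U0_pos R_ge1 Y0_pos Bc_pos tT0 t0 by (intro mult_pos_pos) (auto intro: add_pos_nonneg)
    qed (use p Dpos in auto)
    ultimately show ?thesis by simp
  qed
  show ?thesis using a1 a_le[OF t] u1 u_le[OF t] y_ge[OF t] yY z_ge[OF t] zY by simp
qed

end


lemma pow_integral: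
  fixes c t :: real assumes t: "0 \<le> t"
  shows "((\<lambda>s. c * s^k) has_integral (c * t^(Suc k) / Suc k)) {0..t}"
proof -
  have "((\<lambda>s. c * s^k) has_integral ((\<lambda>s. c * s^(Suc k) / Suc k) t - (\<lambda>s. c * s^(Suc k) / Suc k) 0)) {0..t}"
  proof (rule fundamental_theorem_of_calculus[OF t])
    fix x assume "x \<in> {0..t}"
    show "((\<lambda>s. c * s^(Suc k) / Suc k) has_vector_derivative c * x^k) (at x within {0..t})"
      unfolding has_real_derivative_iff_has_vector_derivative[symmetric]
      by (rule derivative_eq_intros refl | simp del: of_nat_Suc)+
  qed
  then show ?thesis by simp
qed

lemma picard:
  fixes F :: "'a::banach \<Rightarrow> 'a" and x0 :: 'a and L T :: real
  assumes L: "L \<ge> 0" and lip: "\<And>x y. norm (F x - F y) \<le> L * norm (x - y)" and T: "T \<ge> 0"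
  shows "\<exists>x. x 0 = x0 \<and> continuous_on {0..T} x \<and> (\<forall>t\<in>{0..T}. (x has_vector_derivative F (x t)) (at t within {0..T}))"
proof -
  have Fc: "continuous_on S F" for S
  proof -
    have "L-lipschitz_on UNIV F" by (rule lipschitz_onI) (use lip L in \<open>auto simp: dist_norm\<close>)
    then have "continuous_on UNIV F" by (rule lipschitz_on_continuous_on)
    then show ?thesis by (rule continuous_on_subset) auto
  qed
  define \<Phi> where "\<Phi> y = (\<lambda>t. x0 + integral {0..t} (\<lambda>s. F (y s)))" for y :: "real \<Rightarrow> 'a"
  define P where "P n = (\<Phi> ^^ n) (\<lambda>t. x0)" for n
  have P0: "P 0 = (\<lambda>t. x0)" unfolding P_def by simp
  have PS: "P (Suc n) = \<Phi> (P n)" for n unfolding P_def by simp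
  have PSt: "P (Suc m) t = x0 + integral {0..t} (\<lambda>s. F (P m s))" for m t
    by (simp add: PS \<Phi>_def)
  have cP: "continuous_on {0..T} (P n)" for n
  proof (induction n)
    case 0 then show ?case unfolding P0 by simp
  next
    case (Suc n)
    have "continuous_on {0..T} (\<lambda>s. F (P n s))" by (rule continuous_on_compose2[OF Fc Suc]) auto
    then have "(\<lambda>s. F (P n s)) integrable_on {0..T}" by (rule integrable_continuous_real)
    then show ?case unfolding PS \<Phi>_def by (intro continuous_on_add continuous_on_const indefinite_integral_continuous_1)
  qed
  have cFP: "continuous_on {0..t} (\<lambda>s. F (P n s))" if "t \<le> T" for n t
    by (rule continuous_on_compose2[OF Fc continuous_on_subset[OF cP]]) (use that in auto)
  have iFP: "(\<lambda>s. F (P n s)) integrable_on {0..t}" if "t \<le> T" for n t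
    by (rule integrable_continuous_real[OF cFP[OF that]])
  define M where "M = norm (F x0)"
  have bd: "norm (P (Suc n) t - P n t) \<le> M * L^n * t^(Suc n) / fact (Suc n)" if t: "t \<in> {0..T}" for n t
    using t
  proof (induction n arbitrary: t)
    case 0
    then show ?case unfolding PS P0 \<Phi>_def M_def by simp
  next
    case (Suc n)
    have tT: "t \<le> T" "0 \<le> t" using Suc.prems by auto
    have "P (Suc (Suc n)) t - P (Suc n) t = integral {0..t} (\<lambda>s. F (P (Suc n) s) - F (P n s))"
      unfolding PSt[of "Suc n" t] PSt[of n t]
      using integral_diff[OF iFP[OF tT(1)] iFP[OF tT(1)], of "Suc n" n] by simp
    also have "norm \<dots> \<le> integral {0..t} (\<lambda>s. (L * (M * L^n / fact (Suc n))) * s^(Suc n))"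
    proof (rule integral_norm_bound_integral)
      show "(\<lambda>s. F (P (Suc n) s) - F (P n s)) integrable_on {0..t}"
        by (intro integrable_diff iFP tT)
      show "(\<lambda>s. (L * (M * L^n / fact (Suc n))) * s^(Suc n)) integrable_on {0..t}"
        using pow_integral[OF tT(2)] by blast
      fix s assume s: "s \<in> {0..t}"
      have "norm (F (P (Suc n) s) - F (P n s)) \<le> L * norm (P (Suc n) s - P n s)" by (rule lip)
      also have "\<dots> \<le> L * (M * L^n * s^(Suc n) / fact (Suc n))"
        using Suc.IH[of s] s tT L by (intro mult_left_mono) auto
      finally show "norm (F (P (Suc n) s) - F (P n s)) \<le> (L * (M * L^n / fact (Suc n))) * s^(Suc n)"
        by simp
    qed
    also have "\<dots> = (L * (M * L^n / fact (Suc n))) * t^(Suc (Suc n)) / Suc (Suc n)"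
      using pow_integral[OF tT(2)] by (rule integral_unique)
    also have "\<dots> = M * L^(Suc n) * t^(Suc (Suc n)) / fact (Suc (Suc n))"
      by (simp add: field_simps del: of_nat_Suc fact_Suc) (simp add: algebra_simps)
    finally show ?case .
  qed
  have M0: "M \<ge> 0" unfolding M_def by simp
  define Mb where "Mb n = M * L^n * T^(Suc n) / fact (Suc n)" for n
  have bd2: "\<forall>t\<in>{0..T}. norm (P (Suc n) t - P n t) \<le> Mb n" for n
  proof
    fix t assume t: "t \<in> {0..T}"
    have "t^(Suc n) \<le> T^(Suc n)" using t by (intro power_mono) auto
    moreover have "M * L^n \<ge> 0" using M0 L by simp
    ultimately have "M * L^n * t^(Suc n) \<le> M * L^n * T^(Suc n)" by (rule mult_left_mono)
    then have "M * L^n * t^(Suc n) / fact (Suc n) \<le> M * L^n * T^(Suc n) / fact (Suc n)"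
      by (rule divide_right_mono) simp
    then show "norm (P (Suc n) t - P n t) \<le> Mb n" using bd[OF t, of n] unfolding Mb_def by (rule order.trans[rotated])
  qed
  have sm: "summable Mb"
  proof (rule summable_comparison_test')
    show "summable (\<lambda>n. (M*T) * (inverse (fact n) * (L*T)^n))" by (intro summable_mult summable_exp)
    fix n :: nat
    have Mbnn: "Mb n \<ge> 0" unfolding Mb_def using M0 L T by simp
    have "norm (Mb n) = Mb n" using Mbnn by simp
    also have "Mb n = (M*T) * ((L*T)^n / fact (Suc n))" unfolding Mb_def by (simp add: power_mult_distrib mult_ac)
    also have "\<dots> \<le> (M*T) * ((L*T)^n / fact n)"
    proof -
      have f: "(fact n :: real) \<le> fact (Suc n)" by (rule fact_mono) simp
      have "(L*T)^n / fact (Suc n) \<le> (L*T)^n / fact n"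
        by (rule divide_left_mono[OF f]) (use L T in auto)
      then show ?thesis using M0 T by (intro mult_left_mono) auto
    qed
    also have "\<dots> = (M*T) * (inverse (fact n) * (L*T)^n)" by (simp add: divide_inverse mult_ac)
    finally show "norm (Mb n) \<le> (M*T) * (inverse (fact n) * (L*T)^n)" .
  qed
  have ul: "uniform_limit {0..T} (\<lambda>n t. \<Sum>i<n. P (Suc i) t - P i t) (\<lambda>t. \<Sum>i. P (Suc i) t - P i t) sequentially"
    by (rule Weierstrass_m_test_ev[OF _ sm]) (use bd2 in auto)
  define X where "X t = x0 + (\<Sum>i. P (Suc i) t - P i t)" for t
  have ulP: "uniform_limit {0..T} P X sequentially"
  proof -
    have "uniform_limit {0..T} (\<lambda>n t. x0 + (\<Sum>i<n. P (Suc i) t - P i t)) (\<lambda>t. x0 + (\<Sum>i. P (Suc i) t - P i t)) sequentially"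
      by (intro uniform_limit_add uniform_limit_const ul)
    moreover have "(\<lambda>n t. x0 + (\<Sum>i<n. P (Suc i) t - P i t)) = P"
      by (simp add: fun_eq_iff sum_lessThan_telescope[of "\<lambda>i. P i _"] P0)
    ultimately show ?thesis unfolding X_def by simp
  qed
  have cX: "continuous_on {0..T} X"
    by (rule uniform_limit_theorem[OF _ ulP]) (auto intro: always_eventually cP)
  have cFX: "continuous_on {0..T} (\<lambda>s. F (X s))" by (rule continuous_on_compose2[OF Fc cX]) auto
  have eq: "X t = x0 + integral {0..t} (\<lambda>s. F (X s))" if t: "t \<in> {0..T}" for t
  proof -
    have tT: "t \<le> T" "0 \<le> t" using t by auto
    have iFX: "(\<lambda>s. F (X s)) integrable_on {0..t}"
      by (rule integrable_continuous_real, rule continuous_on_subset[OF cFX]) (use tT in auto)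
    have l1: "(\<lambda>n. P (Suc n) t) \<longlonglongrightarrow> X t"
      using tendsto_uniform_limitI[OF ulP t] by (rule LIMSEQ_Suc)
    have l2: "(\<lambda>n. integral {0..t} (\<lambda>s. F (P n s))) \<longlonglongrightarrow> integral {0..t} (\<lambda>s. F (X s))"
    proof (rule tendstoI)
      fix e :: real assume e: "e > 0"
      define e' where "e' = e / (L*T + 1)"
      have e': "e' > 0" unfolding e'_def using e L T by (simp add: add_nonneg_pos)
      show "eventually (\<lambda>n. dist (integral {0..t} (\<lambda>s. F (P n s))) (integral {0..t} (\<lambda>s. F (X s))) < e) sequentially"
        using uniform_limitD[OF ulP e']
      proof (rule eventually_mono)
        fix n assume n: "\<forall>s\<in>{0..T}. dist (P n s) (X s) < e'"
        have "dist (integral {0..t} (\<lambda>s. F (P n s))) (integral {0..t} (\<lambda>s. F (X s)))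
            = norm (integral {0..t} (\<lambda>s. F (P n s) - F (X s)))"
          unfolding dist_norm using integral_diff[OF iFP[OF tT(1)] iFX] by simp
        also have "\<dots> \<le> integral {0..t} (\<lambda>s. L * e')"
        proof (rule integral_norm_bound_integral)
          show "(\<lambda>s. F (P n s) - F (X s)) integrable_on {0..t}" by (intro integrable_diff iFP iFX tT)
          show "(\<lambda>s. L * e') integrable_on {0..t}" by (rule integrable_const_ivl)
          fix s assume s: "s \<in> {0..t}"
          have "norm (F (P n s) - F (X s)) \<le> L * norm (P n s - X s)" by (rule lip)
          also have "\<dots> \<le> L * e'" using n s tT L by (intro mult_left_mono) (auto simp: dist_norm less_imp_le)
          finally show "norm (F (P n s) - F (X s)) \<le> L * e'" .
        qed
        also have "\<dots> = t * (L * e')" using tT by simp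
        also have "\<dots> \<le> T * (L * e')" using tT L e' by (intro mult_right_mono) auto
        also have "\<dots> < e"
        proof -
          have "T * (L * e') = (L*T) * e / (L*T+1)" unfolding e'_def by (simp add: field_simps)
          also have "\<dots> < e"
          proof -
            have p: "L*T + 1 > 0" using L T by (simp add: add_nonneg_pos)
            have "(L*T) * e < (L*T + 1) * e" using e by simp
            then show ?thesis using p by (simp add: divide_less_eq mult.commute)
          qed
          finally show ?thesis .
        qed
        finally show "dist (integral {0..t} (\<lambda>s. F (P n s))) (integral {0..t} (\<lambda>s. F (X s))) < e" .
      qed
    qed
    have "(\<lambda>n. P (Suc n) t) \<longlonglongrightarrow> x0 + integral {0..t} (\<lambda>s. F (X s))"
      unfolding PSt by (intro tendsto_add tendsto_const l2)
    with l1 show ?thesis by (rule LIMSEQ_unique)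
  qed
  show ?thesis
  proof (intro exI conjI ballI)
    show "X 0 = x0" using eq[of 0] T by simp
    show "continuous_on {0..T} X" by (rule cX)
    fix t assume t: "t \<in> {0..T}"
    have "((\<lambda>t. x0 + integral {0..t} (\<lambda>s. F (X s))) has_vector_derivative (0 + F (X t))) (at t within {0..T})"
      by (intro derivative_intros integral_has_vector_derivative cFX t)
    then have "((\<lambda>t. x0 + integral {0..t} (\<lambda>s. F (X s))) has_vector_derivative F (X t)) (at t within {0..T})"
      by simp
    then show "(X has_vector_derivative F (X t)) (at t within {0..T})"
      using has_vector_derivative_transform[OF t, of X, OF eq]
      by simp
  qed
qed


type_synonym st = "real \<times> real \<times> real \<times> real"

definition c0 :: "st \<Rightarrow> real" where "c0 v = fst v"
definition c1 :: "st \<Rightarrow> real" where "c1 v = fst (snd v)"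
definition c2 :: "st \<Rightarrow> real" where "c2 v = fst (snd (snd v))"
definition c3 :: "st \<Rightarrow> real" where "c3 v = snd (snd (snd v))"

lemma c_simps[simp]: "c0 (a,u,y,z) = a" "c1 (a,u,y,z) = u" "c2 (a,u,y,z) = y" "c3 (a,u,y,z) = z"
  by (simp_all add: c0_def c1_def c2_def c3_def)

lemma c_diff[simp]: "c0 (v - w) = c0 v - c0 w" "c1 (v - w) = c1 v - c1 w" "c2 (v - w) = c2 v - c2 w" "c3 (v - w) = c3 v - c3 w"
  by (simp_all add: c0_def c1_def c2_def c3_def)

lemma st_eq: "v = (c0 v, c1 v, c2 v, c3 v)" by (simp add: c0_def c1_def c2_def c3_def)

lemma norm_st: "norm (v::st) = sqrt ((c0 v)^2 + (c1 v)^2 + (c2 v)^2 + (c3 v)^2)"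
proof -
  obtain a u y z where v: "v = (a,u,y,z)" by (metis prod.collapse)
  have "norm (y,z) = sqrt (y^2 + z^2)" by (simp add: norm_Pair)
  moreover have "norm (u,y,z) = sqrt (u^2 + (norm (y,z))^2)" by (simp add: norm_Pair)
  moreover have "norm (a,u,y,z) = sqrt (a^2 + (norm (u,y,z))^2)" by (simp add: norm_Pair)
  ultimately show ?thesis unfolding v by (simp add: add.assoc)
qed

lemma c_le_norm: "\<bar>c0 v\<bar> \<le> norm v" "\<bar>c1 v\<bar> \<le> norm v" "\<bar>c2 v\<bar> \<le> norm v" "\<bar>c3 v\<bar> \<le> norm v"
  unfolding norm_st by (auto intro!: real_le_rsqrt simp: add_nonneg_nonneg)

lemma norm_le_sum: "norm (v::st) \<le> \<bar>c0 v\<bar> + \<bar>c1 v\<bar> + \<bar>c2 v\<bar> + \<bar>c3 v\<bar>"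
proof -
  have "(\<bar>c0 v\<bar> + \<bar>c1 v\<bar> + \<bar>c2 v\<bar> + \<bar>c3 v\<bar>)^2 \<ge> (c0 v)^2 + (c1 v)^2 + (c2 v)^2 + (c3 v)^2"
    by (simp add: power2_eq_square algebra_simps)
  then have "sqrt ((c0 v)^2 + (c1 v)^2 + (c2 v)^2 + (c3 v)^2) \<le> sqrt ((\<bar>c0 v\<bar> + \<bar>c1 v\<bar> + \<bar>c2 v\<bar> + \<bar>c3 v\<bar>)^2)"
    by (rule real_sqrt_le_mono)
  also have "\<dots> = \<bar>c0 v\<bar> + \<bar>c1 v\<bar> + \<bar>c2 v\<bar> + \<bar>c3 v\<bar>" by simp
  finally show ?thesis unfolding norm_st .
qed

lemma norm_mono_st: assumes "\<bar>c0 v\<bar> \<le> \<bar>c0 w\<bar>" "\<bar>c1 v\<bar> \<le> \<bar>c1 w\<bar>" "\<bar>c2 v\<bar> \<le> \<bar>c2 w\<bar>" "\<bar>c3 v\<bar> \<le> \<bar>c3 w\<bar>"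
  shows "norm (v::st) \<le> norm w"
proof -
  have "(c0 v)^2 \<le> (c0 w)^2" "(c1 v)^2 \<le> (c1 w)^2" "(c2 v)^2 \<le> (c2 w)^2" "(c3 v)^2 \<le> (c3 w)^2"
    using assms by (simp_all add: abs_le_square_iff)
  then show ?thesis unfolding norm_st by (intro real_sqrt_le_mono) linarith
qed


definition LB :: "st set \<Rightarrow> (st \<Rightarrow> real) \<Rightarrow> bool" where
  "LB S f \<longleftrightarrow> (\<exists>L M. \<forall>x\<in>S. \<forall>y\<in>S. \<bar>f x - f y\<bar> \<le> L * norm (x - y) \<and> \<bar>f x\<bar> \<le> M)"

lemma LB_const: "LB S (\<lambda>x. c)" unfolding LB_def by (rule exI[of _ 0], rule exI[of _ "\<bar>c\<bar>"]) simp

lemma LB_c: assumes "\<forall>x\<in>S. norm x \<le> B" shows "LB S c0" "LB S c1" "LB S c2" "LB S c3"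
proof -
  have "\<bar>c0 x - c0 y\<bar> \<le> 1 * norm (x - y)" "\<bar>c1 x - c1 y\<bar> \<le> 1 * norm (x - y)"
       "\<bar>c2 x - c2 y\<bar> \<le> 1 * norm (x - y)" "\<bar>c3 x - c3 y\<bar> \<le> 1 * norm (x - y)" for x y
    using c_le_norm[of "x - y"] by simp_all
  moreover have "\<bar>c0 x\<bar> \<le> B" "\<bar>c1 x\<bar> \<le> B" "\<bar>c2 x\<bar> \<le> B" "\<bar>c3 x\<bar> \<le> B" if "x \<in> S" for x
    using c_le_norm[of x] assms that by force+
  ultimately show "LB S c0" "LB S c1" "LB S c2" "LB S c3" unfolding LB_def by blast+
qed

lemma LB_add: assumes "LB S f" "LB S g" shows "LB S (\<lambda>x. f x + g x)"
proof -
  from assms obtain L1 M1 L2 M2 where 1: "\<forall>x\<in>S. \<forall>y\<in>S. \<bar>f x - f y\<bar> \<le> L1 * norm (x - y) \<and> \<bar>f x\<bar> \<le> M1"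
    and 2: "\<forall>x\<in>S. \<forall>y\<in>S. \<bar>g x - g y\<bar> \<le> L2 * norm (x - y) \<and> \<bar>g x\<bar> \<le> M2" unfolding LB_def by blast
  show ?thesis unfolding LB_def
  proof (intro exI ballI conjI)
    fix x y assume xy: "x \<in> S" "y \<in> S"
    have "\<bar>(f x + g x) - (f y + g y)\<bar> \<le> \<bar>f x - f y\<bar> + \<bar>g x - g y\<bar>" by simp
    also have "\<dots> \<le> (L1 + L2) * norm (x - y)" using 1 2 xy by (simp add: distrib_right add_mono)
    finally show "\<bar>(f x + g x) - (f y + g y)\<bar> \<le> (L1 + L2) * norm (x - y)" .
    show "\<bar>f x + g x\<bar> \<le> M1 + M2" using 1 2 xy by (smt (verit))
  qed
qed

lemma LB_minus: assumes "LB S f" shows "LB S (\<lambda>x. - f x)"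
proof -
  have e: "\<bar>- f x - - f y\<bar> = \<bar>f x - f y\<bar>" for x y by linarith
  show ?thesis using assms unfolding LB_def e by simp
qed

lemma LB_diff: assumes "LB S f" "LB S g" shows "LB S (\<lambda>x. f x - g x)"
  using LB_add[OF assms(1) LB_minus[OF assms(2)]] by simp

lemma LB_mult: assumes "LB S f" "LB S g" shows "LB S (\<lambda>x. f x * g x)"
proof -
  from assms obtain L1 M1 L2 M2 where 1: "\<forall>x\<in>S. \<forall>y\<in>S. \<bar>f x - f y\<bar> \<le> L1 * norm (x - y) \<and> \<bar>f x\<bar> \<le> M1"
    and 2: "\<forall>x\<in>S. \<forall>y\<in>S. \<bar>g x - g y\<bar> \<le> L2 * norm (x - y) \<and> \<bar>g x\<bar> \<le> M2" unfolding LB_def by blast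
  show ?thesis unfolding LB_def
  proof (intro exI ballI conjI)
    fix x y assume xy: "x \<in> S" "y \<in> S"
    have M: "0 \<le> M1" "0 \<le> M2" using 1 2 xy by (meson abs_ge_zero order_trans)+
    have "f x * g x - f y * g y = f x * (g x - g y) + g y * (f x - f y)" by (simp add: algebra_simps)
    then have "\<bar>f x * g x - f y * g y\<bar> \<le> \<bar>f x\<bar> * \<bar>g x - g y\<bar> + \<bar>g y\<bar> * \<bar>f x - f y\<bar>"
      by (simp add: abs_mult[symmetric] abs_triangle_ineq[THEN order_trans])
    also have "\<bar>f x\<bar> * \<bar>g x - g y\<bar> + \<bar>g y\<bar> * \<bar>f x - f y\<bar> \<le> M1 * (L2 * norm (x - y)) + M2 * (L1 * norm (x - y))"
      using 1 2 xy M by (intro add_mono mult_mono) auto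
    finally show "\<bar>f x * g x - f y * g y\<bar> \<le> (M1 * L2 + M2 * L1) * norm (x - y)" by (simp add: algebra_simps)
    have "\<bar>f x\<bar> * \<bar>g x\<bar> \<le> M1 * M2" using 1 2 xy M by (intro mult_mono) auto
    then have "\<bar>f x * g x\<bar> \<le> M1 * M2" by (simp add: abs_mult)
    then show "\<bar>f x * g x\<bar> \<le> M1 * M2" .
  qed
qed

lemma LB_power: assumes "LB S f" shows "LB S (\<lambda>x. f x ^ n)"
proof (induction n)
  case 0 then show ?case using LB_const by simp
next
  case (Suc n) then show ?case using LB_mult[OF assms Suc] by simp
qed

lemma LB_scale: assumes "LB S f" shows "LB S (\<lambda>x. c * f x)"
  using LB_mult[OF LB_const assms] .


definition F0 :: "real \<Rightarrow> st \<Rightarrow> real" where "F0 b v = - b * p_SL (- c1 v) (c2 v) (c3 v) * (c0 v)^3"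
definition F1 :: "real \<Rightarrow> st \<Rightarrow> real" where "F1 b v = - b * q_SL (- c1 v) (c2 v) (c3 v) * (c0 v)^2 * c1 v"
definition F2 :: "real \<Rightarrow> st \<Rightarrow> real" where "F2 b v = - b * q_SL (c2 v) (- c1 v) (c3 v) * (c0 v)^2 * c2 v"
definition F3 :: "real \<Rightarrow> st \<Rightarrow> real" where "F3 b v = - b * q_SL (c3 v) (- c1 v) (c2 v) * (c0 v)^2 * c3 v"
definition FF :: "real \<Rightarrow> st \<Rightarrow> st" where "FF b v = (F0 b v, F1 b v, F2 b v, F3 b v)"

lemma LB_F: assumes "\<forall>x\<in>S. norm x \<le> B" shows "LB S (F0 b)" "LB S (F1 b)" "LB S (F2 b)" "LB S (F3 b)"
  unfolding F0_def[abs_def] F1_def[abs_def] F2_def[abs_def] F3_def[abs_def] p_SL_def q_SL_def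
  by (intro LB_mult LB_add LB_diff LB_minus LB_power LB_const LB_c[OF assms])+

lemma FF_lip: assumes "\<forall>x\<in>S. norm x \<le> B" shows "\<exists>K\<ge>0. \<forall>v\<in>S. \<forall>w\<in>S. norm (FF b v - FF b w) \<le> K * norm (v - w)"
proof -
  from LB_F(1)[OF assms, of b] obtain L0 where
    l0: "\<forall>x\<in>S. \<forall>y\<in>S. \<bar>F0 b x - F0 b y\<bar> \<le> L0 * norm (x - y)" unfolding LB_def by blast
  from LB_F(2)[OF assms, of b] obtain L1 where
    l1: "\<forall>x\<in>S. \<forall>y\<in>S. \<bar>F1 b x - F1 b y\<bar> \<le> L1 * norm (x - y)" unfolding LB_def by blast
  from LB_F(3)[OF assms, of b] obtain L2 where
    l2: "\<forall>x\<in>S. \<forall>y\<in>S. \<bar>F2 b x - F2 b y\<bar> \<le> L2 * norm (x - y)" unfolding LB_def by blast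
  from LB_F(4)[OF assms, of b] obtain L3 where
    l3: "\<forall>x\<in>S. \<forall>y\<in>S. \<bar>F3 b x - F3 b y\<bar> \<le> L3 * norm (x - y)" unfolding LB_def by blast
  show ?thesis
  proof (intro exI[of _ "max 0 (L0+L1+L2+L3)"] conjI ballI)
    fix v w assume vw: "v \<in> S" "w \<in> S"
    have "norm (FF b v - FF b w) \<le> \<bar>F0 b v - F0 b w\<bar> + \<bar>F1 b v - F1 b w\<bar> + \<bar>F2 b v - F2 b w\<bar> + \<bar>F3 b v - F3 b w\<bar>"
      using norm_le_sum[of "FF b v - FF b w"] unfolding FF_def by simp
    also have "\<dots> \<le> (L0+L1+L2+L3) * norm (v - w)" using l0 l1 l2 l3 vw by (simp add: distrib_right add_mono)
    also have "\<dots> \<le> max 0 (L0+L1+L2+L3) * norm (v - w)" by (intro mult_right_mono) auto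
    finally show "norm (FF b v - FF b w) \<le> max 0 (L0+L1+L2+L3) * norm (v - w)" .
  qed simp
qed

definition clp :: "real \<Rightarrow> real \<Rightarrow> real \<Rightarrow> real" where "clp l h x = min (max x l) h"
definition clamp :: "st \<Rightarrow> st \<Rightarrow> st \<Rightarrow> st" where
  "clamp lo hi v = (clp (c0 lo) (c0 hi) (c0 v), clp (c1 lo) (c1 hi) (c1 v), clp (c2 lo) (c2 hi) (c2 v), clp (c3 lo) (c3 hi) (c3 v))"
definition bx :: "st \<Rightarrow> st \<Rightarrow> st set" where
  "bx lo hi = {v. c0 lo \<le> c0 v \<and> c0 v \<le> c0 hi \<and> c1 lo \<le> c1 v \<and> c1 v \<le> c1 hi \<and>
                  c2 lo \<le> c2 v \<and> c2 v \<le> c2 hi \<and> c3 lo \<le> c3 v \<and> c3 v \<le> c3 hi}"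

lemma clp_lip: "l \<le> h \<Longrightarrow> \<bar>clp l h x - clp l h y\<bar> \<le> \<bar>x - y\<bar>"
  unfolding clp_def by (auto simp: min_def max_def abs_if)

lemma clamp_lip: assumes "c0 lo \<le> c0 hi" "c1 lo \<le> c1 hi" "c2 lo \<le> c2 hi" "c3 lo \<le> c3 hi"
  shows "norm (clamp lo hi v - clamp lo hi w) \<le> norm (v - w)"
  by (rule norm_mono_st) (simp_all add: clamp_def clp_lip assms)

lemma clamp_in: assumes "c0 lo \<le> c0 hi" "c1 lo \<le> c1 hi" "c2 lo \<le> c2 hi" "c3 lo \<le> c3 hi"
  shows "clamp lo hi v \<in> bx lo hi"
  using assms unfolding clamp_def bx_def clp_def by auto

lemma clamp_id: "v \<in> bx lo hi \<Longrightarrow> clamp lo hi v = v"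
  unfolding clamp_def bx_def clp_def by (subst (5) st_eq) (auto simp: min_def max_def)

lemma bx_bounded: "v \<in> bx lo hi \<Longrightarrow> norm v \<le> (\<bar>c0 lo\<bar> + \<bar>c0 hi\<bar>) + (\<bar>c1 lo\<bar> + \<bar>c1 hi\<bar>) + (\<bar>c2 lo\<bar> + \<bar>c2 hi\<bar>) + (\<bar>c3 lo\<bar> + \<bar>c3 hi\<bar>)"
proof -
  assume v: "v \<in> bx lo hi"
  have "\<bar>c0 v\<bar> \<le> \<bar>c0 lo\<bar> + \<bar>c0 hi\<bar>" "\<bar>c1 v\<bar> \<le> \<bar>c1 lo\<bar> + \<bar>c1 hi\<bar>"
       "\<bar>c2 v\<bar> \<le> \<bar>c2 lo\<bar> + \<bar>c2 hi\<bar>" "\<bar>c3 v\<bar> \<le> \<bar>c3 lo\<bar> + \<bar>c3 hi\<bar>"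
    using v unfolding bx_def by auto
  then show ?thesis using norm_le_sum[of v] by linarith
qed

lemma G_lip: assumes "c0 lo \<le> c0 hi" "c1 lo \<le> c1 hi" "c2 lo \<le> c2 hi" "c3 lo \<le> c3 hi"
  shows "\<exists>K\<ge>0. \<forall>v w. norm (FF b (clamp lo hi v) - FF b (clamp lo hi w)) \<le> K * norm (v - w)"
proof -
  obtain K where K: "K \<ge> 0" "\<forall>v\<in>bx lo hi. \<forall>w\<in>bx lo hi. norm (FF b v - FF b w) \<le> K * norm (v - w)"
    using FF_lip[of "bx lo hi", OF ballI[OF bx_bounded]] by blast
  show ?thesis
  proof (intro exI[of _ K] conjI allI)
    fix v w
    have "norm (FF b (clamp lo hi v) - FF b (clamp lo hi w)) \<le> K * norm (clamp lo hi v - clamp lo hi w)"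
      using K(2) clamp_in[OF assms] by blast
    also have "\<dots> \<le> K * norm (v - w)" using K(1) clamp_lip[OF assms] by (intro mult_left_mono) auto
    finally show "norm (FF b (clamp lo hi v) - FF b (clamp lo hi w)) \<le> K * norm (v - w)" .
  qed (rule K(1))
qed


lemma lim_aux1: fixes b k c y :: real assumes "b>0" "k>0" "y > 0"
  shows "((\<lambda>t. exp (c - ln (y + b*t)/k)) \<longlongrightarrow> 0) at_top"
  using assms by real_asymp
lemma lim_aux2: fixes c k :: real assumes "k>0" shows "((\<lambda>t. c * exp (- k*t)) \<longlongrightarrow> 0) at_top"
  using assms by real_asymp

locale glob =
  fixes h0 h1 h2 h3 :: real and g0 g1 g2 g3 :: "real \<Rightarrow> real"
  assumes hpos: "h0 > 0" "h1 > 0" "h2 > 0" "h3 > 0" and h23: "h2 \<le> h3"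
    and sol: "SL_solution h0 h1 h2 h3 g0 g1 g2 g3"
begin

lemma L: assumes "T \<ge> 0" shows "loc h0 h1 h2 h3 T g0 g1 g2 g3"
proof
  show "h0 > 0" "h1 > 0" "h2 > 0" "h3 > 0" "h2 \<le> h3" "T \<ge> 0" using hpos h23 assms by auto
  show "SLloc h0 h1 h2 h3 T g0 g1 g2 g3"
    unfolding SLloc_def
  proof (intro conjI ballI)
    show "g0 0 = h0" "g1 0 = h1" "g2 0 = h2" "g3 0 = h3" using sol unfolding SL_solution_def by auto
    fix t assume t: "t \<in> {0..T}"
    then have t0: "t \<ge> 0" by simp
    have sub: "{0..T} \<subseteq> {0::real..}" by auto
    from sol t0 show "(g0 has_real_derivative (- beta_SL h0 h1 h2 h3 * p_SL (- g1 t) (g2 t) (g3 t) * (g0 t)^3)) (at t within {0..T})"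
      unfolding SL_solution_def by (meson DERIV_subset sub)
    from sol t0 show "(g1 has_real_derivative (- beta_SL h0 h1 h2 h3 * q_SL (- g1 t) (g2 t) (g3 t) * (g0 t)^2 * g1 t)) (at t within {0..T})"
      unfolding SL_solution_def by (meson DERIV_subset sub)
    from sol t0 show "(g2 has_real_derivative (- beta_SL h0 h1 h2 h3 * q_SL (g2 t) (- g1 t) (g3 t) * (g0 t)^2 * g2 t)) (at t within {0..T})"
      unfolding SL_solution_def by (meson DERIV_subset sub)
    from sol t0 show "(g3 has_real_derivative (- beta_SL h0 h1 h2 h3 * q_SL (g3 t) (- g1 t) (g2 t) * (g0 t)^2 * g3 t)) (at t within {0..T})"
      unfolding SL_solution_def by (meson DERIV_subset sub)
  qed
qed

lemma g0_lim: "(g0 \<longlongrightarrow> 0) at_top"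
proof -
  interpret L0: loc h0 h1 h2 h3 0 g0 g1 g2 g3 by (rule L) simp
  have bd: "g0 t \<le> exp (ln h0 + L0.Lg 0 - L0.Lg t) \<and> g0 t > 0" if t: "t \<ge> 0" for t
  proof -
    interpret L: loc h0 h1 h2 h3 t g0 g1 g2 g3 by (rule L) (rule t)
    have "ln (g0 t) + L.Lg t \<le> ln h0 + L.Lg 0" by (rule L.a_decay) (use t in auto)
    then have "exp (ln (g0 t)) \<le> exp (ln h0 + L0.Lg 0 - L0.Lg t)" by simp
    then show ?thesis using L.gpos[of t] t by simp
  qed
  define c0 where "c0 = ln h0 + L0.Lg 0"
  have lim: "((\<lambda>t. exp (ln h0 + L0.Lg 0 - L0.Lg t)) \<longlongrightarrow> 0) at_top"
    unfolding c0_def[symmetric] unfolding L0.Lg_def using lim_aux1[of L0.Bc "6 * L0.R * L0.Bc" L0.Y0 "c0"] L0.Bc_pos L0.Y0_pos L0.R_ge1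
    by simp
  show ?thesis
  proof (rule tendsto_sandwich[OF _ _ tendsto_const lim])
    show "eventually (\<lambda>t. 0 \<le> g0 t) at_top" using eventually_ge_at_top[of 0]
      by (rule eventually_mono) (use bd in \<open>auto intro: less_imp_le\<close>)
    show "eventually (\<lambda>t. g0 t \<le> exp (ln h0 + L0.Lg 0 - L0.Lg t)) at_top" using eventually_ge_at_top[of 0]
      by (rule eventually_mono) (use bd in auto)
  qed
qed

lemma g1_lim: "(g1 \<longlongrightarrow> 0) at_top"
proof -
  interpret L0: loc h0 h1 h2 h3 0 g0 g1 g2 g3 by (rule L) simp
  have bd: "g1 t \<le> exp (L0.V4 0 + L0.Lg 0 - L0.Lg t) \<and> g1 t > 0" if t: "t \<ge> 0" for t
  proof -
    interpret L: loc h0 h1 h2 h3 t g0 g1 g2 g3 by (rule L) (rule t)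
    have "L.V4 t + L.Lg t \<le> L.V4 0 + L.Lg 0" by (rule L.u_decay) (use t in auto)
    moreover have "ln (g1 t) \<le> L.V4 t" unfolding L.V4_def L.Cc_def using L.R_ge1 by simp
    ultimately have "exp (ln (g1 t)) \<le> exp (L0.V4 0 + L0.Lg 0 - L0.Lg t)" by simp
    then show ?thesis using L.gpos[of t] t by simp
  qed
  define c1 where "c1 = L0.V4 0 + L0.Lg 0"
  have lim: "((\<lambda>t. exp (L0.V4 0 + L0.Lg 0 - L0.Lg t)) \<longlongrightarrow> 0) at_top"
    unfolding c1_def[symmetric] unfolding L0.Lg_def using lim_aux1[of L0.Bc "6 * L0.R * L0.Bc" L0.Y0 "c1"] L0.Bc_pos L0.Y0_pos L0.R_ge1
    by simp
  show ?thesis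
  proof (rule tendsto_sandwich[OF _ _ tendsto_const lim])
    show "eventually (\<lambda>t. 0 \<le> g1 t) at_top" using eventually_ge_at_top[of 0]
      by (rule eventually_mono) (use bd in \<open>auto intro: less_imp_le\<close>)
    show "eventually (\<lambda>t. g1 t \<le> exp (L0.V4 0 + L0.Lg 0 - L0.Lg t)) at_top" using eventually_ge_at_top[of 0]
      by (rule eventually_mono) (use bd in auto)
  qed
qed

lemma g2_lim: "filterlim g2 at_top at_top"
proof -
  interpret L0: loc h0 h1 h2 h3 0 g0 g1 g2 g3 by (rule L) simp
  have bd: "(g2 t)^2 \<ge> t / (3 * L0.R) \<and> g2 t > 0" if t: "t \<ge> 0" for t
  proof -
    interpret L: loc h0 h1 h2 h3 t g0 g1 g2 g3 by (rule L) (rule t)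
    have "h2^2 \<ge> 0" by simp
    moreover have "h2^2 + t / (3 * L.R) \<le> (g2 t)^2" using L.y_sq_lb[of t] t by simp
    moreover have "g2 t > 0" using L.gpos[of t] t by simp
    ultimately show ?thesis by linarith
  qed
  show ?thesis unfolding filterlim_at_top
  proof
    fix Z :: real
    have "eventually (\<lambda>t. t \<ge> max 0 (3 * L0.R * Z^2)) at_top" by (rule eventually_ge_at_top)
    then show "eventually (\<lambda>t. Z \<le> g2 t) at_top"
    proof (rule eventually_mono)
      fix t assume t: "t \<ge> max 0 (3 * L0.R * Z^2)"
      then have "Z^2 \<le> t / (3 * L0.R)" using L0.R_ge1 by (simp add: field_simps)
      also have "\<dots> \<le> (g2 t)^2" using bd[of t] t by simp
      finally have "Z^2 \<le> (g2 t)^2" .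
      then have "\<bar>Z\<bar> \<le> \<bar>g2 t\<bar>" by (simp add: abs_le_square_iff)
      then have "\<bar>Z\<bar> \<le> g2 t" using bd[of t] t by simp
      then show "Z \<le> g2 t" by simp
    qed
  qed
qed

lemma g3_lim: "filterlim g3 at_top at_top"
proof (rule filterlim_at_top_mono[OF g2_lim])
  show "eventually (\<lambda>t. g2 t \<le> g3 t) at_top"
    using eventually_ge_at_top[of 0]
  proof (rule eventually_mono)
    fix t :: real assume t: "t \<ge> 0"
    interpret L: loc h0 h1 h2 h3 t g0 g1 g2 g3 by (rule L) (rule t)
    show "g2 t \<le> g3 t" using L.yz[of t] t by simp
  qed
qed


lemma d_lim: "((\<lambda>t. g3 t - g2 t) \<longlongrightarrow> 0) at_top"
proof -
  interpret L0: loc h0 h1 h2 h3 0 g0 g1 g2 g3 by (rule L) simp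
  have l1: "((\<lambda>t. L0.R^3 * L0.w0 * exp (- L0.\<kappa> * t)) \<longlongrightarrow> 0) at_top"
    using lim_aux2[OF L0.\<kappa>_pos, of "L0.R^3 * L0.w0"] by simp
  then have e1: "eventually (\<lambda>t. L0.R^3 * L0.w0 * exp (- L0.\<kappa> * t) < 1/2) at_top"
    by (rule order_tendstoD) simp
  have e2: "eventually (\<lambda>t. t \<ge> max 0 (3 * L0.R * (4 * L0.C5 / L0.\<kappa>))) at_top" by (rule eventually_ge_at_top)
  from eventually_conj[OF e1 e2] obtain T1 where T1: "\<And>t. t \<ge> T1 \<Longrightarrow>
      L0.R^3 * L0.w0 * exp (- L0.\<kappa> * t) < 1/2 \<and> t \<ge> max 0 (3 * L0.R * (4 * L0.C5 / L0.\<kappa>))"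
    unfolding eventually_at_top_linorder by blast
  have T10: "T1 \<ge> 0" using T1[of T1] by simp
  define c where "c = exp (L0.\<kappa> / 4 * T1) * (g3 T1 - g2 T1)"
  have bd: "g3 t - g2 t \<le> c * exp (- (L0.\<kappa> / 4) * t) \<and> g3 t - g2 t \<ge> 0" if t: "t \<ge> T1" for t
  proof -
    have t0: "t \<ge> 0" using t T10 by simp
    interpret L: loc h0 h1 h2 h3 t g0 g1 g2 g3 by (rule L) (rule t0)
    define V where "V x = exp (L.\<kappa> / 4 * x) * (g3 x - g2 x)" for x
    have "V t \<le> V T1"
    proof (rule mono_le2[of T1 T1 t t V "\<lambda>x. exp (L.\<kappa> / 4 * x) * (L.\<kappa> / 4) * (g3 x - g2 x)
          + exp (L.\<kappa> / 4 * x) * (g2 x * L.w x * (- L.\<rho> x * q_SL (g2 x) (- g1 x) (g3 x) + L.kw x))"])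
      fix x assume x: "x \<in> {0..t}"
      show "(V has_real_derivative exp (L.\<kappa> / 4 * x) * (L.\<kappa> / 4) * (g3 x - g2 x)
          + exp (L.\<kappa> / 4 * x) * (g2 x * L.w x * (- L.\<rho> x * q_SL (g2 x) (- g1 x) (g3 x) + L.kw x))) (at x within {0..t})"
        unfolding V_def[abs_def] by (rule derivative_eq_intros L.d_deriv x refl | simp)+
    next
      fix x assume x: "x \<in> {T1..t}"
      then have x0: "x \<in> {0..t}" using T10 by auto
      have sm: "L.R^3 * L.w x \<le> 1/2"
      proof -
        have "L.R^3 * L.w x \<le> L.R^3 * (L.w0 * exp (- L.\<kappa> * x))"
          using L.w_exp[OF x0] L.R_ge1 by (intro mult_left_mono) auto
        also have "\<dots> < 1/2" using T1[of x] x by (simp add: mult.assoc)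
        finally show ?thesis by simp
      qed
      have yb: "L.C5 / (g2 x)^2 \<le> L.\<kappa> / 4"
      proof -
        have "x \<ge> 3 * L.R * (4 * L.C5 / L.\<kappa>)" using T1[of x] x by simp
        then have "x / (3 * L.R) \<ge> 4 * L.C5 / L.\<kappa>" using L.R_ge1 by (simp add: field_simps)
        moreover have "(g2 x)^2 \<ge> h2^2 + x / (3 * L.R)" by (rule L.y_sq_lb[OF x0])
        moreover have "h2^2 \<ge> 0" by simp
        ultimately have "(g2 x)^2 \<ge> 4 * L.C5 / L.\<kappa>" by linarith
        then show ?thesis using L.gpos[OF x0] L.\<kappa>_pos L.C5_pos by (simp add: field_simps)
      qed
      have dn: "g3 x - g2 x \<ge> 0" using L.yz[OF x0] by simp
      have "g2 x * L.w x * (- L.\<rho> x * q_SL (g2 x) (- g1 x) (g3 x) + L.kw x) \<le> (g3 x - g2 x) * (L.C5 / (g2 x)^2 - L.\<kappa> / 2)"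
        by (rule L.d_deriv_le[OF x0 sm])
      also have "\<dots> \<le> (g3 x - g2 x) * (- L.\<kappa> / 4)"
      proof -
        have "L.C5 / (g2 x)^2 - L.\<kappa> / 2 \<le> - L.\<kappa> / 4" using yb by linarith
        then show ?thesis using dn by (intro mult_left_mono) auto
      qed
      finally have "(L.\<kappa> / 4) * (g3 x - g2 x) + g2 x * L.w x * (- L.\<rho> x * q_SL (g2 x) (- g1 x) (g3 x) + L.kw x) \<le> 0"
        by (simp add: algebra_simps)
      then have "exp (L.\<kappa> / 4 * x) * ((L.\<kappa> / 4) * (g3 x - g2 x) + g2 x * L.w x * (- L.\<rho> x * q_SL (g2 x) (- g1 x) (g3 x) + L.kw x)) \<le> 0"
        by (simp add: mult_nonneg_nonpos)
      then show "exp (L.\<kappa> / 4 * x) * (L.\<kappa> / 4) * (g3 x - g2 x)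
          + exp (L.\<kappa> / 4 * x) * (g2 x * L.w x * (- L.\<rho> x * q_SL (g2 x) (- g1 x) (g3 x) + L.kw x)) \<le> 0"
        by (simp add: algebra_simps)
    qed (use t T10 in auto)
    then have "exp (L.\<kappa> / 4 * t) * (g3 t - g2 t) \<le> c" unfolding V_def c_def by simp
    then have "g3 t - g2 t \<le> c * exp (- (L.\<kappa> / 4) * t)"
      by (simp add: exp_minus field_simps)
    then show ?thesis using L.yz[of t] t0 by simp
  qed
  have lim: "((\<lambda>t. c * exp (- (L0.\<kappa> / 4) * t)) \<longlongrightarrow> 0) at_top"
    by (rule lim_aux2) (use L0.\<kappa>_pos in simp)
  show ?thesis
  proof (rule tendsto_sandwich[OF _ _ tendsto_const lim])
    show "eventually (\<lambda>t. 0 \<le> g3 t - g2 t) at_top" using eventually_ge_at_top[of T1]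
      by (rule eventually_mono) (use bd in auto)
    show "eventually (\<lambda>t. g3 t - g2 t \<le> c * exp (- (L0.\<kappa> / 4) * t)) at_top" using eventually_ge_at_top[of T1]
      by (rule eventually_mono) (use bd in auto)
  qed
qed

end


lemma comp_deriv:
  assumes "(X has_vector_derivative D) F"
  shows "((\<lambda>t. c0 (X t)) has_real_derivative c0 D) F" "((\<lambda>t. c1 (X t)) has_real_derivative c1 D) F"
        "((\<lambda>t. c2 (X t)) has_real_derivative c2 D) F" "((\<lambda>t. c3 (X t)) has_real_derivative c3 D) F"
proof -
  have d: "(X has_derivative (\<lambda>h. h *\<^sub>R D)) F" using assms by (simp add: has_vector_derivative_def)
  show "((\<lambda>t. c0 (X t)) has_real_derivative c0 D) F"
    using has_derivative_fst[OF d] unfolding c0_def has_field_derivative_def by (simp add: mult_commute_abs)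
  show "((\<lambda>t. c1 (X t)) has_real_derivative c1 D) F"
    using has_derivative_fst[OF has_derivative_snd[OF d]] unfolding c1_def has_field_derivative_def by (simp add: mult_commute_abs)
  show "((\<lambda>t. c2 (X t)) has_real_derivative c2 D) F"
    using has_derivative_fst[OF has_derivative_snd[OF has_derivative_snd[OF d]]] unfolding c2_def has_field_derivative_def by (simp add: mult_commute_abs)
  show "((\<lambda>t. c3 (X t)) has_real_derivative c3 D) F"
    using has_derivative_snd[OF has_derivative_snd[OF has_derivative_snd[OF d]]] unfolding c3_def has_field_derivative_def by (simp add: mult_commute_abs)
qed

lemma sol_from_X:
  assumes X0: "X 0 = (h0,h1,h2,h3)"
    and inbox: "\<And>s. s \<in> {0..\<tau>} \<Longrightarrow> X s \<in> bx lo hi"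
    and der: "\<And>s. s \<in> {0..\<tau>} \<Longrightarrow> (X has_vector_derivative FF (beta_SL h0 h1 h2 h3) (clamp lo hi (X s))) (at s within {0..\<tau>})"
  shows "SLloc h0 h1 h2 h3 \<tau> (\<lambda>t. c0 (X t)) (\<lambda>t. c1 (X t)) (\<lambda>t. c2 (X t)) (\<lambda>t. c3 (X t))"
  unfolding SLloc_def
proof (intro conjI ballI)
  show "c0 (X 0) = h0" "c1 (X 0) = h1" "c2 (X 0) = h2" "c3 (X 0) = h3" using X0 by simp_all
  fix s assume s: "s \<in> {0..\<tau>}"
  have d: "(X has_vector_derivative FF (beta_SL h0 h1 h2 h3) (X s)) (at s within {0..\<tau>})"
    using der[OF s] clamp_id[OF inbox[OF s]] by simp
  note cd = comp_deriv[OF d]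
  show "((\<lambda>t. c0 (X t)) has_real_derivative - beta_SL h0 h1 h2 h3 * p_SL (- c1 (X s)) (c2 (X s)) (c3 (X s)) * (c0 (X s))^3) (at s within {0..\<tau>})"
    using cd(1) by (simp add: FF_def F0_def)
  show "((\<lambda>t. c1 (X t)) has_real_derivative - beta_SL h0 h1 h2 h3 * q_SL (- c1 (X s)) (c2 (X s)) (c3 (X s)) * (c0 (X s))^2 * c1 (X s)) (at s within {0..\<tau>})"
    using cd(2) by (simp add: FF_def F1_def)
  show "((\<lambda>t. c2 (X t)) has_real_derivative - beta_SL h0 h1 h2 h3 * q_SL (c2 (X s)) (- c1 (X s)) (c3 (X s)) * (c0 (X s))^2 * c2 (X s)) (at s within {0..\<tau>})"
    using cd(3) by (simp add: FF_def F2_def)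
  show "((\<lambda>t. c3 (X t)) has_real_derivative - beta_SL h0 h1 h2 h3 * q_SL (c3 (X s)) (- c1 (X s)) (c2 (X s)) * (c0 (X s))^2 * c3 (X s)) (at s within {0..\<tau>})"
    using cd(4) by (simp add: FF_def F3_def)
qed


lemma c_cont[continuous_intros]: "continuous_on S c0" "continuous_on S c1" "continuous_on S c2" "continuous_on S c3"
  unfolding c0_def[abs_def] c1_def[abs_def] c2_def[abs_def] c3_def[abs_def] by (intro continuous_intros)+

lemma exist_T:
  fixes h0 h1 h2 h3 T :: real
  assumes hpos: "h0 > 0" "h1 > 0" "h2 > 0" "h3 > 0" and h23: "h2 \<le> h3" and T: "T \<ge> 0"
  shows "\<exists>g0 g1 g2 g3. SLloc h0 h1 h2 h3 T g0 g1 g2 g3"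
proof -
  define b where "b = beta_SL h0 h1 h2 h3"
  define YM where "YM = loc.Y0 h2 h3 + loc.Bc h1 h2 h3 * T"
  define l0 where "l0 = loc.D h0 h1 h2 h3 / (loc.U0 h1 h2 h3 * loc.R h2 h3 * YM)"
  define l1 where "l1 = h1 * exp (- loc.Cu h1 h2 h3 * T)"
  define u1 where "u1 = loc.U0 h1 h2 h3"
  define u2 where "u2 = sqrt YM"
  define u3 where "u3 = loc.R h2 h3 * sqrt YM"
  define lo :: st where "lo = (min l0 h0 - 1, min l1 h1 - 1, h2 - 1, h2 - 1)"
  define hi :: st where "hi = (h0 + 1, max u1 h1 + 1, max u2 h2 + 1, max u3 h3 + 1)"
  have lohi: "c0 lo \<le> c0 hi" "c1 lo \<le> c1 hi" "c2 lo \<le> c2 hi" "c3 lo \<le> c3 hi"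
    unfolding lo_def hi_def using h23 by auto
  define Bo where "Bo = {v. c0 lo < c0 v} \<inter> {v. c0 v < c0 hi} \<inter> {v. c1 lo < c1 v} \<inter> {v. c1 v < c1 hi}
      \<inter> {v. c2 lo < c2 v} \<inter> {v. c2 v < c2 hi} \<inter> {v. c3 lo < c3 v} \<inter> {v. c3 v < c3 hi}"
  have Bo_open: "open Bo" unfolding Bo_def
    by (intro open_Int open_Collect_less continuous_intros)
  have Bo_box: "Bo \<subseteq> bx lo hi" unfolding Bo_def bx_def by auto
  have bx_closed: "closed (bx lo hi)"
  proof -
    have "bx lo hi = {v. c0 lo \<le> c0 v} \<inter> {v. c0 v \<le> c0 hi} \<inter> {v. c1 lo \<le> c1 v} \<inter> {v. c1 v \<le> c1 hi}
      \<inter> {v. c2 lo \<le> c2 v} \<inter> {v. c2 v \<le> c2 hi} \<inter> {v. c3 lo \<le> c3 v} \<inter> {v. c3 v \<le> c3 hi}"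
      unfolding bx_def by auto
    also have "closed \<dots>" by (intro closed_Int closed_Collect_le continuous_intros)
    finally show ?thesis .
  qed
  obtain K where K: "K \<ge> 0" "\<And>v w. norm (FF b (clamp lo hi v) - FF b (clamp lo hi w)) \<le> K * norm (v - w)"
    using G_lip[OF lohi, of b] by blast
  obtain X where X0: "X 0 = (h0,h1,h2,h3)" and Xc: "continuous_on {0..T} X"
    and Xd: "\<And>t. t \<in> {0..T} \<Longrightarrow> (X has_vector_derivative FF b (clamp lo hi (X t))) (at t within {0..T})"
    using picard[of K "\<lambda>v. FF b (clamp lo hi v)", OF K T, of "(h0,h1,h2,h3)"] by blast
  have X0Bo: "X 0 \<in> Bo" unfolding X0 Bo_def lo_def hi_def using h23 by auto
  have key: "X \<tau> \<in> Bo" if \<tau>: "\<tau> \<in> {0..T}" and inb: "\<And>s. s \<in> {0..\<tau>} \<Longrightarrow> X s \<in> bx lo hi" for \<tau>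
  proof -
    have sl: "SLloc h0 h1 h2 h3 \<tau> (\<lambda>t. c0 (X t)) (\<lambda>t. c1 (X t)) (\<lambda>t. c2 (X t)) (\<lambda>t. c3 (X t))"
    proof (rule sol_from_X[where X=X and \<tau>=\<tau>, OF X0 inb])
      fix s assume s: "s \<in> {0..\<tau>}"
      then have "s \<in> {0..T}" using \<tau> by auto
      from Xd[OF this] show "(X has_vector_derivative FF (beta_SL h0 h1 h2 h3) (clamp lo hi (X s))) (at s within {0..\<tau>})"
        unfolding b_def by (rule has_vector_derivative_within_subset) (use \<tau> in auto)
    qed
    interpret L: loc h0 h1 h2 h3 \<tau> "\<lambda>t. c0 (X t)" "\<lambda>t. c1 (X t)" "\<lambda>t. c2 (X t)" "\<lambda>t. c3 (X t)"
      by unfold_locales (use hpos h23 \<tau> sl in auto)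
    have "\<tau> \<in> {0..\<tau>}" using \<tau> by auto
    from L.inner[OF this, of T] \<tau> show ?thesis
      unfolding Bo_def lo_def hi_def l0_def l1_def u1_def u2_def u3_def YM_def by auto
  qed
  have allBo: "\<forall>t\<in>{0..T}. X t \<in> Bo"
  proof (rule ccontr)
    assume nb: "\<not> (\<forall>t\<in>{0..T}. X t \<in> Bo)"
    define A where "A = {0..T} \<inter> X -` (- Bo)"
    have Ane: "A \<noteq> {}" using nb unfolding A_def by auto
    have Acl: "closed A" unfolding A_def by (rule continuous_closed_preimage[OF Xc]) (use Bo_open in auto)
    have Abd: "bdd_below A" unfolding A_def by (rule bdd_belowI[of _ 0]) auto
    define \<tau> where "\<tau> = Inf A"
    have \<tau>A: "\<tau> \<in> A" unfolding \<tau>_def by (rule closed_contains_Inf[OF Ane Abd Acl])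
    have \<tau>T: "\<tau> \<in> {0..T}" and \<tau>nB: "X \<tau> \<notin> Bo" using \<tau>A unfolding A_def by auto
    have \<tau>0: "\<tau> > 0" using \<tau>T \<tau>nB X0Bo by (cases "\<tau> = 0") auto
    have below: "X s \<in> Bo" if "s \<in> {0..<\<tau>}" for s
    proof (rule ccontr)
      assume "X s \<notin> Bo"
      then have "s \<in> A" using that \<tau>T unfolding A_def by auto
      then have "\<tau> \<le> s" unfolding \<tau>_def by (rule cInf_lower[OF _ Abd])
      then show False using that by simp
    qed
    have "X ` closure {0..<\<tau>} \<subseteq> bx lo hi"
    proof (rule image_closure_subset)
      show "continuous_on (closure {0..<\<tau>}) X" using \<tau>0 \<tau>T by (auto intro: continuous_on_subset[OF Xc])
      show "closed (bx lo hi)" by (rule bx_closed)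
      show "X ` {0..<\<tau>} \<subseteq> bx lo hi" using below Bo_box by auto
    qed
    then have "\<And>s. s \<in> {0..\<tau>} \<Longrightarrow> X s \<in> bx lo hi" using \<tau>0 by auto
    from key[OF \<tau>T this] \<tau>nB show False by simp
  qed
  have "SLloc h0 h1 h2 h3 T (\<lambda>t. c0 (X t)) (\<lambda>t. c1 (X t)) (\<lambda>t. c2 (X t)) (\<lambda>t. c3 (X t))"
  proof (rule sol_from_X[where X=X and \<tau>=T, OF X0])
    show "\<And>s. s \<in> {0..T} \<Longrightarrow> X s \<in> bx lo hi" using allBo Bo_box by auto
    show "\<And>s. s \<in> {0..T} \<Longrightarrow> (X has_vector_derivative FF (beta_SL h0 h1 h2 h3) (clamp lo hi (X s))) (at s within {0..T})"
      using Xd unfolding b_def by blast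
  qed
  then show ?thesis by blast
qed


lemma sum4_le: fixes a b c d :: real shows "\<bar>a\<bar> + \<bar>b\<bar> + \<bar>c\<bar> + \<bar>d\<bar> \<le> 2 * sqrt (a^2 + b^2 + c^2 + d^2)"
proof -
  have "(\<bar>a\<bar> + \<bar>b\<bar> + \<bar>c\<bar> + \<bar>d\<bar>)^2 \<le> (2 * sqrt (a^2 + b^2 + c^2 + d^2))^2"
  proof -
    have id: "4*(A^2+B^2+C^2+D^2) - (A+B+C+D)^2 = (A-B)^2+(A-C)^2+(A-D)^2+(B-C)^2+(B-D)^2+(C-D)^2" for A B C D :: real
      by (simp add: power2_eq_square algebra_simps)
    have "(\<bar>a\<bar> + \<bar>b\<bar> + \<bar>c\<bar> + \<bar>d\<bar>)^2 \<le> 4 * (\<bar>a\<bar>^2 + \<bar>b\<bar>^2 + \<bar>c\<bar>^2 + \<bar>d\<bar>^2)"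
      using id[of "\<bar>a\<bar>" "\<bar>b\<bar>" "\<bar>c\<bar>" "\<bar>d\<bar>"] by (smt (verit) zero_le_power2)
    then have "(\<bar>a\<bar> + \<bar>b\<bar> + \<bar>c\<bar> + \<bar>d\<bar>)^2 \<le> 4 * (a^2 + b^2 + c^2 + d^2)" by simp
    also have "\<dots> = (2 * sqrt (a^2 + b^2 + c^2 + d^2))^2" by (simp add: power_mult_distrib)
    finally show ?thesis .
  qed
  then show ?thesis by (rule power2_le_imp_le) simp
qed
lemma unique_T:
  fixes h0 h1 h2 h3 T :: real
  assumes hpos: "h0 > 0" "h1 > 0" "h2 > 0" "h3 > 0" and h23: "h2 \<le> h3" and T: "T \<ge> 0"
    and s1: "SLloc h0 h1 h2 h3 T g0 g1 g2 g3" and s2: "SLloc h0 h1 h2 h3 T f0 f1 f2 f3"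
    and t: "t \<in> {0..T}"
  shows "g0 t = f0 t \<and> g1 t = f1 t \<and> g2 t = f2 t \<and> g3 t = f3 t"
proof -
  interpret A: loc h0 h1 h2 h3 T g0 g1 g2 g3 by unfold_locales (use hpos h23 T s1 in auto)
  interpret B: loc h0 h1 h2 h3 T f0 f1 f2 f3 by unfold_locales (use hpos h23 T s2 in auto)
  define b where "b = beta_SL h0 h1 h2 h3"
  define YM where "YM = A.Y0 + A.Bc * T"
  define lo :: st where "lo = (A.D / (A.U0 * A.R * YM), h1 * exp (- A.Cu * T), h2, h2)"
  define hi :: st where "hi = (h0, A.U0, sqrt YM, A.R * sqrt YM)"
  define Xa where "Xa s = (g0 s, g1 s, g2 s, g3 s)" for s
  define Xb where "Xb s = (f0 s, f1 s, f2 s, f3 s)" for s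
  have inA: "Xa s \<in> bx lo hi" if "s \<in> {0..T}" for s
    using A.inner[OF that order_refl] unfolding Xa_def bx_def lo_def hi_def YM_def by simp
  have inB: "Xb s \<in> bx lo hi" if "s \<in> {0..T}" for s
    using B.inner[OF that order_refl] unfolding Xb_def bx_def lo_def hi_def YM_def by simp
  obtain K where K: "K \<ge> 0" "\<forall>v\<in>bx lo hi. \<forall>w\<in>bx lo hi. norm (FF b v - FF b w) \<le> K * norm (v - w)"
    using FF_lip[of "bx lo hi", OF ballI[OF bx_bounded]] by blast
  define V where "V s = (g0 s - f0 s)^2 + (g1 s - f1 s)^2 + (g2 s - f2 s)^2 + (g3 s - f3 s)^2" for s
  define V' where "V' s = 2 * (g0 s - f0 s) * (F0 b (Xa s) - F0 b (Xb s)) + 2 * (g1 s - f1 s) * (F1 b (Xa s) - F1 b (Xb s))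
     + 2 * (g2 s - f2 s) * (F2 b (Xa s) - F2 b (Xb s)) + 2 * (g3 s - f3 s) * (F3 b (Xa s) - F3 b (Xb s))" for s
  have dV: "(V has_real_derivative V' s) (at s within {0..T})" if s: "s \<in> {0..T}" for s
  proof -
    have e: "F0 b (Xa s) = - A.\<beta> * p_SL (- g1 s) (g2 s) (g3 s) * (g0 s)^3"
      "F1 b (Xa s) = - A.\<beta> * q_SL (- g1 s) (g2 s) (g3 s) * (g0 s)^2 * g1 s"
      "F2 b (Xa s) = - A.\<beta> * q_SL (g2 s) (- g1 s) (g3 s) * (g0 s)^2 * g2 s"
      "F3 b (Xa s) = - A.\<beta> * q_SL (g3 s) (- g1 s) (g2 s) * (g0 s)^2 * g3 s"
      "F0 b (Xb s) = - A.\<beta> * p_SL (- f1 s) (f2 s) (f3 s) * (f0 s)^3"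
      "F1 b (Xb s) = - A.\<beta> * q_SL (- f1 s) (f2 s) (f3 s) * (f0 s)^2 * f1 s"
      "F2 b (Xb s) = - A.\<beta> * q_SL (f2 s) (- f1 s) (f3 s) * (f0 s)^2 * f2 s"
      "F3 b (Xb s) = - A.\<beta> * q_SL (f3 s) (- f1 s) (f2 s) * (f0 s)^2 * f3 s"
      unfolding Xa_def Xb_def F0_def F1_def F2_def F3_def b_def A.\<beta>_def by simp_all
    show ?thesis unfolding V_def[abs_def] V'_def e
      by (rule derivative_eq_intros A.d0 A.d1 A.d2 A.d3 B.d0 B.d1 B.d2 B.d3 s refl | simp add: B.\<beta>_def A.\<beta>_def algebra_simps)+
  qed
  have V'le: "V' s \<le> 4 * K * V s" if s: "s \<in> {0..T}" for s
  proof -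
    define D where "D = Xa s - Xb s"
    define E where "E = FF b (Xa s) - FF b (Xb s)"
    have nD: "norm D = sqrt (V s)" unfolding D_def norm_st V_def Xa_def Xb_def by simp
    have nE: "norm E \<le> K * norm D" unfolding E_def D_def using K(2) inA[OF s] inB[OF s] by blast
    have cE: "\<bar>c0 E\<bar> \<le> norm E" "\<bar>c1 E\<bar> \<le> norm E" "\<bar>c2 E\<bar> \<le> norm E" "\<bar>c3 E\<bar> \<le> norm E"
      by (rule c_le_norm)+
    have cEs: "c0 E = F0 b (Xa s) - F0 b (Xb s)" "c1 E = F1 b (Xa s) - F1 b (Xb s)"
      "c2 E = F2 b (Xa s) - F2 b (Xb s)" "c3 E = F3 b (Xa s) - F3 b (Xb s)" unfolding E_def FF_def by simp_all
    have "V' s \<le> 2 * \<bar>g0 s - f0 s\<bar> * norm E + 2 * \<bar>g1 s - f1 s\<bar> * norm E + 2 * \<bar>g2 s - f2 s\<bar> * norm E + 2 * \<bar>g3 s - f3 s\<bar> * norm E"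
    proof -
      have xy: "2 * x * y \<le> 2 * \<bar>x\<bar> * z" if "\<bar>y\<bar> \<le> z" for x y z :: real
      proof -
        have "x * y \<le> \<bar>x * y\<bar>" by simp
        also have "\<dots> = \<bar>x\<bar> * \<bar>y\<bar>" by (simp add: abs_mult)
        also have "\<dots> \<le> \<bar>x\<bar> * z" using that by (intro mult_left_mono) auto
        finally show ?thesis by simp
      qed
      show ?thesis unfolding V'_def
        using xy[OF cE(1)[unfolded cEs(1)], of "g0 s - f0 s"] xy[OF cE(2)[unfolded cEs(2)], of "g1 s - f1 s"]
          xy[OF cE(3)[unfolded cEs(3)], of "g2 s - f2 s"] xy[OF cE(4)[unfolded cEs(4)], of "g3 s - f3 s"]
        by linarith
    qed
    also have "\<dots> = 2 * (\<bar>g0 s - f0 s\<bar> + \<bar>g1 s - f1 s\<bar> + \<bar>g2 s - f2 s\<bar> + \<bar>g3 s - f3 s\<bar>) * norm E"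
      by (simp add: algebra_simps)
    also have "\<dots> \<le> 2 * (2 * sqrt (V s)) * (K * sqrt (V s))"
    proof (rule mult_mono)
      show "2 * (\<bar>g0 s - f0 s\<bar> + \<bar>g1 s - f1 s\<bar> + \<bar>g2 s - f2 s\<bar> + \<bar>g3 s - f3 s\<bar>) \<le> 2 * (2 * sqrt (V s))"
        unfolding V_def using sum4_le[of "g0 s - f0 s" "g1 s - f1 s" "g2 s - f2 s" "g3 s - f3 s"] by simp
      show "norm E \<le> K * sqrt (V s)" using nE nD by simp
    qed (use K in \<open>auto simp: V_def add_nonneg_nonneg\<close>)
    also have "\<dots> = 4 * K * V s" unfolding V_def by (simp add: add_nonneg_nonneg)
    finally show ?thesis .
  qed
  have "V t * exp (- (4*K) * t) \<le> V 0 * exp (- (4*K) * 0)"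
  proof (rule mono_le[of 0 t T "\<lambda>s. V s * exp (- (4*K) * s)" "\<lambda>s. (V' s - 4 * K * V s) * exp (- (4*K) * s)"])
    fix x assume x: "x \<in> {0..T}"
    show "((\<lambda>s. V s * exp (- (4*K) * s)) has_real_derivative (V' x - 4 * K * V x) * exp (- (4*K) * x)) (at x within {0..T})"
      by (rule derivative_eq_intros dV x refl | simp add: algebra_simps)+
    show "(V' x - 4 * K * V x) * exp (- (4*K) * x) \<le> 0" using V'le[OF x] by (simp add: mult_nonpos_nonneg)
  qed (use t in auto)
  moreover have "V 0 = 0" unfolding V_def using A.init B.init by simp
  ultimately have "V t * exp (- (4 * K * t)) \<le> 0" by simp
  then have "V t \<le> 0" by (simp add: mult_le_0_iff)
  moreover have nn: "(g0 t - f0 t)^2 \<ge> 0" "(g1 t - f1 t)^2 \<ge> 0" "(g2 t - f2 t)^2 \<ge> 0" "(g3 t - f3 t)^2 \<ge> 0"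
    by simp_all
  ultimately have "(g0 t - f0 t)^2 = 0" "(g1 t - f1 t)^2 = 0" "(g2 t - f2 t)^2 = 0" "(g3 t - f3 t)^2 = 0"
    unfolding V_def by linarith+
  then show ?thesis by simp
qed


lemma SLloc_restrict: assumes "SLloc h0 h1 h2 h3 T g0 g1 g2 g3" "0 \<le> T'" "T' \<le> T"
  shows "SLloc h0 h1 h2 h3 T' g0 g1 g2 g3"
proof -
  have sub: "{0..T'} \<subseteq> {0..T}" using assms by auto
  have d: "t \<in> {0..T}" if "t \<in> {0..T'}" for t using that assms by auto
  show ?thesis using assms(1) unfolding SLloc_def
  proof (intro conjI ballI; (elim conjE)?)
    fix t assume t: "t \<in> {0..T'}"
    assume A: "\<forall>t\<in>{0..T}. (g0 has_real_derivative (- beta_SL h0 h1 h2 h3 * p_SL (- g1 t) (g2 t) (g3 t) * (g0 t)^3)) (at t within {0..T}) \<and>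
        (g1 has_real_derivative (- beta_SL h0 h1 h2 h3 * q_SL (- g1 t) (g2 t) (g3 t) * (g0 t)^2 * g1 t)) (at t within {0..T}) \<and>
        (g2 has_real_derivative (- beta_SL h0 h1 h2 h3 * q_SL (g2 t) (- g1 t) (g3 t) * (g0 t)^2 * g2 t)) (at t within {0..T}) \<and>
        (g3 has_real_derivative (- beta_SL h0 h1 h2 h3 * q_SL (g3 t) (- g1 t) (g2 t) * (g0 t)^2 * g3 t)) (at t within {0..T})"
    from A d[OF t] show "(g0 has_real_derivative (- beta_SL h0 h1 h2 h3 * p_SL (- g1 t) (g2 t) (g3 t) * (g0 t)^3)) (at t within {0..T'})"
      by (meson DERIV_subset sub)
    from A d[OF t] show "(g1 has_real_derivative (- beta_SL h0 h1 h2 h3 * q_SL (- g1 t) (g2 t) (g3 t) * (g0 t)^2 * g1 t)) (at t within {0..T'})"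
      by (meson DERIV_subset sub)
    from A d[OF t] show "(g2 has_real_derivative (- beta_SL h0 h1 h2 h3 * q_SL (g2 t) (- g1 t) (g3 t) * (g0 t)^2 * g2 t)) (at t within {0..T'})"
      by (meson DERIV_subset sub)
    from A d[OF t] show "(g3 has_real_derivative (- beta_SL h0 h1 h2 h3 * q_SL (g3 t) (- g1 t) (g2 t) * (g0 t)^2 * g3 t)) (at t within {0..T'})"
      by (meson DERIV_subset sub)
  qed
qed

lemma within_conv:
  assumes t: "0 \<le> t" "t < n" and d: "(f has_real_derivative D) (at t within {0..n})"
  shows "(f has_real_derivative D) (at t within {0..})"
proof -
  have "at t within {0..n} = at t within {0..}"
    by (rule at_within_nhd[of t "{..<n}"]) (use t in auto)
  then show ?thesis using d by simp
qed

lemma exist_glob: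
  fixes h0 h1 h2 h3 :: real
  assumes hpos: "h0 > 0" "h1 > 0" "h2 > 0" "h3 > 0" and h23: "h2 \<le> h3"
  shows "\<exists>g0 g1 g2 g3. SL_solution h0 h1 h2 h3 g0 g1 g2 g3"
proof -
  have "\<forall>n::nat. \<exists>q. SLloc h0 h1 h2 h3 (real n) (fst q) (fst (snd q)) (fst (snd (snd q))) (snd (snd (snd q)))"
  proof
    fix n :: nat
    obtain g0 g1 g2 g3 where "SLloc h0 h1 h2 h3 (real n) g0 g1 g2 g3" using exist_T[OF hpos h23, of "real n"] by auto
    then show "\<exists>q. SLloc h0 h1 h2 h3 (real n) (fst q) (fst (snd q)) (fst (snd (snd q))) (snd (snd (snd q)))"
      by (intro exI[of _ "(g0,g1,g2,g3)"]) simp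
  qed
  then obtain Q where Q: "\<And>n. SLloc h0 h1 h2 h3 (real n) (fst (Q n)) (fst (snd (Q n))) (fst (snd (snd (Q n)))) (snd (snd (snd (Q n))))"
    by metis
  define S0 where "S0 n = fst (Q n)" for n
  define S1 where "S1 n = fst (snd (Q n))" for n
  define S2 where "S2 n = fst (snd (snd (Q n)))" for n
  define S3 where "S3 n = snd (snd (snd (Q n)))" for n
  have SQ: "SLloc h0 h1 h2 h3 (real n) (S0 n) (S1 n) (S2 n) (S3 n)" for n
    using Q[of n] unfolding S0_def S1_def S2_def S3_def .
  have cons: "S0 m s = S0 n s \<and> S1 m s = S1 n s \<and> S2 m s = S2 n s \<and> S3 m s = S3 n s"
    if s: "0 \<le> s" "s \<le> real m" "s \<le> real n" for m n s
  proof -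
    define T where "T = min (real m) (real n)"
    have "SLloc h0 h1 h2 h3 T (S0 m) (S1 m) (S2 m) (S3 m)" by (rule SLloc_restrict[OF SQ]) (use s in \<open>auto simp: T_def\<close>)
    moreover have "SLloc h0 h1 h2 h3 T (S0 n) (S1 n) (S2 n) (S3 n)" by (rule SLloc_restrict[OF SQ]) (use s in \<open>auto simp: T_def\<close>)
    ultimately show ?thesis using unique_T[OF hpos h23, of T] s unfolding T_def by auto
  qed
  define N where "N t = nat \<lceil>t\<rceil> + 1" for t :: real
  have NT: "t < real (N t)" for t unfolding N_def by linarith
  define G0 where "G0 t = S0 (N t) t" for t
  define G1 where "G1 t = S1 (N t) t" for t
  define G2 where "G2 t = S2 (N t) t" for t
  define G3 where "G3 t = S3 (N t) t" for t
  have GS: "G0 s = S0 n s \<and> G1 s = S1 n s \<and> G2 s = S2 n s \<and> G3 s = S3 n s" if "0 \<le> s" "s \<le> real n" for s n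
    unfolding G0_def G1_def G2_def G3_def using cons[of s "N s" n] NT[of s] that by auto
  have "SL_solution h0 h1 h2 h3 G0 G1 G2 G3"
    unfolding SL_solution_def
  proof (intro conjI allI impI)
    show "G0 0 = h0" "G1 0 = h1" "G2 0 = h2" "G3 0 = h3"
      using SQ[of 1] GS[of 0 1] unfolding SLloc_def by auto
    fix t :: real assume t: "0 \<le> t"
    define n where "n = N t"
    have tn: "t < real n" unfolding n_def by (rule NT)
    have eqs: "\<And>s. s \<in> {0..real n} \<Longrightarrow> S0 n s = G0 s \<and> S1 n s = G1 s \<and> S2 n s = G2 s \<and> S3 n s = G3 s"
      using GS by auto
    have tt: "t \<in> {0..real n}" using t tn by auto
    from SQ[of n] tt have D:
      "(S0 n has_real_derivative (- beta_SL h0 h1 h2 h3 * p_SL (- S1 n t) (S2 n t) (S3 n t) * (S0 n t)^3)) (at t within {0..real n})"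
      "(S1 n has_real_derivative (- beta_SL h0 h1 h2 h3 * q_SL (- S1 n t) (S2 n t) (S3 n t) * (S0 n t)^2 * S1 n t)) (at t within {0..real n})"
      "(S2 n has_real_derivative (- beta_SL h0 h1 h2 h3 * q_SL (S2 n t) (- S1 n t) (S3 n t) * (S0 n t)^2 * S2 n t)) (at t within {0..real n})"
      "(S3 n has_real_derivative (- beta_SL h0 h1 h2 h3 * q_SL (S3 n t) (- S1 n t) (S2 n t) * (S0 n t)^2 * S3 n t)) (at t within {0..real n})"
      unfolding SLloc_def by auto
    have e: "S0 n t = G0 t" "S1 n t = G1 t" "S2 n t = G2 t" "S3 n t = G3 t" using eqs[OF tt] by auto
    have tr: "(g has_real_derivative D') (at t within {0..real n})"
      if "(f has_real_derivative D') (at t within {0..real n})" "\<And>s. s \<in> {0..real n} \<Longrightarrow> f s = g s" for f g D'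
      by (rule has_field_derivative_transform_within[OF that(1) zero_less_one tt]) (use that in auto)
    show "(G0 has_real_derivative (- beta_SL h0 h1 h2 h3 * p_SL (- G1 t) (G2 t) (G3 t) * (G0 t)^3)) (at t within {0..})"
      using within_conv[OF t tn tr[OF D(1)]] eqs e by simp
    show "(G1 has_real_derivative (- beta_SL h0 h1 h2 h3 * q_SL (- G1 t) (G2 t) (G3 t) * (G0 t)^2 * G1 t)) (at t within {0..})"
      using within_conv[OF t tn tr[OF D(2)]] eqs e by simp
    show "(G2 has_real_derivative (- beta_SL h0 h1 h2 h3 * q_SL (G2 t) (- G1 t) (G3 t) * (G0 t)^2 * G2 t)) (at t within {0..})"
      using within_conv[OF t tn tr[OF D(3)]] eqs e by simp
    show "(G3 has_real_derivative (- beta_SL h0 h1 h2 h3 * q_SL (G3 t) (- G1 t) (G2 t) * (G0 t)^2 * G3 t)) (at t within {0..})"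
      using within_conv[OF t tn tr[OF D(4)]] eqs e by simp
  qed
  then show ?thesis by blast
qed

lemma swap_sol: "SL_solution h0 h1 h2 h3 g0 g1 g2 g3 \<longleftrightarrow> SL_solution h0 h1 h3 h2 g0 g1 g3 g2"
proof -
  have b: "beta_SL h0 h1 h3 h2 = beta_SL h0 h1 h2 h3" unfolding beta_SL_def by (simp add: mult_ac)
  have p: "\<And>x y z. p_SL x z y = p_SL x y z" by (rule p_sym)
  have q: "\<And>x y z. q_SL x z y = q_SL x y z" by (rule q_sym)
  show ?thesis unfolding SL_solution_def b p[of "- g1 _" "g3 _" "g2 _"] q[of "- g1 _" "g3 _" "g2 _"]
    q[of "g2 _" "- g1 _" "g3 _"] q[of "g3 _" "- g1 _" "g2 _"] by blast
qed


lemma main_le: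
  fixes h0 h1 h2 h3 :: real
  assumes "h0 > 0" and "h1 > 0" and "h2 > 0" and "h3 > 0" and h23: "h2 \<le> h3"
  shows "(\<exists>g0 g1 g2 g3. SL_solution h0 h1 h2 h3 g0 g1 g2 g3) \<and>
         (\<forall>g0 g1 g2 g3. SL_solution h0 h1 h2 h3 g0 g1 g2 g3 \<longrightarrow>
            (g0 \<longlongrightarrow> 0) at_top \<and> (g1 \<longlongrightarrow> 0) at_top \<and>
            filterlim g2 at_top at_top \<and> filterlim g3 at_top at_top \<and>
            ((\<lambda>t. g3 t - g2 t) \<longlongrightarrow> 0) at_top)"
proof (intro conjI allI impI)
  show "\<exists>g0 g1 g2 g3. SL_solution h0 h1 h2 h3 g0 g1 g2 g3" by (rule exist_glob) (use assms in auto)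
  fix g0 g1 g2 g3 assume sol: "SL_solution h0 h1 h2 h3 g0 g1 g2 g3"
  interpret glob h0 h1 h2 h3 g0 g1 g2 g3 by unfold_locales (use assms sol in auto)
  show "(g0 \<longlongrightarrow> 0) at_top" by (rule g0_lim)
  show "(g1 \<longlongrightarrow> 0) at_top" by (rule g1_lim)
  show "filterlim g2 at_top at_top" by (rule g2_lim)
  show "filterlim g3 at_top at_top" by (rule g3_lim)
  show "((\<lambda>t. g3 t - g2 t) \<longlongrightarrow> 0) at_top" by (rule d_lim)
qed

theorem theorem5p8:
  fixes h0 h1 h2 h3 :: real
  assumes "h0 > 0" and "h1 > 0" and "h2 > 0" and "h3 > 0"
  shows "(\<exists>g0 g1 g2 g3. SL_solution h0 h1 h2 h3 g0 g1 g2 g3) \<and>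
         (\<forall>g0 g1 g2 g3. SL_solution h0 h1 h2 h3 g0 g1 g2 g3 \<longrightarrow>
            (g0 \<longlongrightarrow> 0) at_top \<and> (g1 \<longlongrightarrow> 0) at_top \<and>
            filterlim g2 at_top at_top \<and> filterlim g3 at_top at_top \<and>
            ((\<lambda>t. g3 t - g2 t) \<longlongrightarrow> 0) at_top)"
proof (cases "h2 \<le> h3")
  case True
  then show ?thesis by (rule main_le[OF assms])
next
  case False
  then have h32: "h3 \<le> h2" by simp
  note M = main_le[OF assms(1,2,4,3) h32]
  show ?thesis
  proof (intro conjI allI impI)
    from M obtain g0 g1 g2 g3 where "SL_solution h0 h1 h3 h2 g0 g1 g2 g3" by blast
    then have "SL_solution h0 h1 h2 h3 g0 g1 g3 g2" using swap_sol by blast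
    then show "\<exists>g0 g1 g2 g3. SL_solution h0 h1 h2 h3 g0 g1 g2 g3" by blast
    fix g0 g1 g2 g3 assume "SL_solution h0 h1 h2 h3 g0 g1 g2 g3"
    then have s: "SL_solution h0 h1 h3 h2 g0 g1 g3 g2" using swap_sol by blast
    with M have L: "(g0 \<longlongrightarrow> 0) at_top" "(g1 \<longlongrightarrow> 0) at_top"
        "filterlim g3 at_top at_top" "filterlim g2 at_top at_top" "((\<lambda>t. g2 t - g3 t) \<longlongrightarrow> 0) at_top"
      by blast+
    show "(g0 \<longlongrightarrow> 0) at_top" "(g1 \<longlongrightarrow> 0) at_top" "filterlim g2 at_top at_top" "filterlim g3 at_top at_top"
      using L by auto
    have "((\<lambda>t. - (g2 t - g3 t)) \<longlongrightarrow> - 0) at_top" by (rule tendsto_minus[OF L(5)])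
    then show "((\<lambda>t. g3 t - g2 t) \<longlongrightarrow> 0) at_top" by simp
  qed
qed

end
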